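(* Let $(G,G^+)$ be a simple partially ordered abelian group of rank one, and let $\mathfrak{n}$ be a generalized integer associated to $G$ (i.e. $G\cong\mathbb{Z}_{\mathfrak{n}}$ as abelian groups). Then for every infinite generalized integer $\mathfrak{m}$ coprime with $\mathfrak{n}$ there exist a simple Riesz group of rank one $(\widetilde G(\mathfrak{m}),\widetilde G^+(\mathfrak{m}))$ and a positive morphism $\tau\colon G\to\widetilde G(\mathfrak{m})$ such that (1) $\widetilde G(\mathfrak{m})$ is isomorphic, as an abelian group, to $\mathbb{Z}_{\mathfrak{n}\cdot\mathfrak{m}}$, and (2) $\tau$ is an order-embedding.
   Context: Partially ordered abelian group $(G,G^+)$: abelian group with a submonoid $G^+\ni 0$ with $G^+\cap(-G^+)=\{0\}$, $x\le_G y$ iff $y-x\in G^+$. It is simple if $G\ne 0$ and every nonzero $u\in G^+$ is an order-unit (for all $x$ there is $n$ with $-nu\le x\le nu$). It is a Riesz group if whenever $x,y_1,y_2\in G^+$ with $x\le y_1+y_2$ there are $x_1,x_2\in G^+$ with $x=x_1+x_2$, $x_j\le y_j$. Rank one: isomorphic to a nonzero subgroup of $\mathbb{Q}$. A positive morphism is a homomorphism $f$ with $f(G^+)\subseteq H^+$; an order-embedding is an injective positive morphism with $f(G^+)=f(G)\cap H^+$. A generalized integer is a map $\mathfrak{n}\colon\mathbb{P}\to\{0,1,2,\dots,\infty\}$ ($\mathbb{P}$ the primes), written $\prod_p p^{\mathfrak{n}(p)}$; it is finite if it never takes the value $\infty$ and is nonzero at only finitely many primes, and infinite otherwise. Products add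 exponents; $\mathfrak{n}\mid\mathfrak{m}$ if $\mathfrak{m}=\mathfrak{n}\mathfrak{n}'$ for some $\mathfrak{n}'$; $\mathfrak{n},\mathfrak{m}$ are coprime if for every prime $p$, $0\in\{\mathfrak{n}(p),\mathfrak{m}(p)\}$. $\mathbb{Z}_{\mathfrak{n}}=\{a/b\in\mathbb{Q}: a\in\mathbb{Z}, b\mid\mathfrak{n}\}$; every subgroup of $\mathbb{Q}$ containing $1$ is $\mathbb{Z}_{\mathfrak{n}}$ for a unique $\mathfrak{n}$. *)

theory Defs
  imports Main "HOL-Library.Extended_Nat" "HOL-Computational_Algebra.Primes"
begin

definition subgrp :: "'a::ab_group_add set \<Rightarrow> bool" where
  "subgrp G \<longleftrightarrow> 0 \<in> G \<and> (\<forall>x\<in>G. \<forall>y\<in>G. x + y \<in> G) \<and> (\<forall>x\<in>G. - x \<in> G)"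

definition po_group :: "'a::ab_group_add set \<Rightarrow> 'a set \<Rightarrow> bool" where
  "po_group G P \<longleftrightarrow> subgrp G \<and> P \<subseteq> G \<and> 0 \<in> P \<and> (\<forall>x\<in>P. \<forall>y\<in>P. x + y \<in> P)
     \<and> P \<inter> uminus ` P = {0}"

definition po_le :: "'a::ab_group_add set \<Rightarrow> 'a \<Rightarrow> 'a \<Rightarrow> bool" where
  "po_le P x y \<longleftrightarrow> y - x \<in> P"

primrec nmul :: "nat \<Rightarrow> 'a::ab_group_add \<Rightarrow> 'a" where
  "nmul 0 u = 0"
| "nmul (Suc n) u = u + nmul n u"

definition order_unit :: "'a::ab_group_add set \<Rightarrow> 'a set \<Rightarrow> 'a \<Rightarrow> bool" where
  "order_unit G P u \<longleftrightarrow> u \<in> P \<and>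
     (\<forall>x\<in>G. \<exists>n::nat. po_le P (- nmul n u) x \<and> po_le P x (nmul n u))"

definition simple_pog :: "'a::ab_group_add set \<Rightarrow> 'a set \<Rightarrow> bool" where
  "simple_pog G P \<longleftrightarrow> G \<noteq> {0} \<and> (\<forall>u\<in>P. u \<noteq> 0 \<longrightarrow> order_unit G P u)"

definition riesz :: "'a::ab_group_add set \<Rightarrow> 'a set \<Rightarrow> bool" where
  "riesz G P \<longleftrightarrow> (\<forall>x\<in>P. \<forall>y1\<in>P. \<forall>y2\<in>P. po_le P x (y1 + y2) \<longrightarrow>
     (\<exists>x1\<in>P. \<exists>x2\<in>P. x = x1 + x2 \<and> po_le P x1 y1 \<and> po_le P x2 y2))"

definition additive_on :: "'a::ab_group_add set \<Rightarrow> ('a \<Rightarrow> 'b::ab_group_add) \<Rightarrow> bool" where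
  "additive_on G f \<longleftrightarrow> (\<forall>x\<in>G. \<forall>y\<in>G. f (x + y) = f x + f y)"

definition ab_iso :: "'a::ab_group_add set \<Rightarrow> 'b::ab_group_add set \<Rightarrow> ('a \<Rightarrow> 'b) \<Rightarrow> bool" where
  "ab_iso G H f \<longleftrightarrow> additive_on G f \<and> bij_betw f G H"

definition rank_one :: "'a::ab_group_add set \<Rightarrow> bool" where
  "rank_one G \<longleftrightarrow> (\<exists>(K::rat set) f. subgrp K \<and> K \<noteq> {0} \<and> ab_iso G K f)"

definition pos_morph :: "'a::ab_group_add set \<Rightarrow> 'a set \<Rightarrow> 'b::ab_group_add set \<Rightarrow> 'b set
    \<Rightarrow> ('a \<Rightarrow> 'b) \<Rightarrow> bool" where
  "pos_morph G P H Q f \<longleftrightarrow> additive_on G f \<and> f ` G \<subseteq> H \<and> f ` P \<subseteq> Q"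

definition order_embedding :: "'a::ab_group_add set \<Rightarrow> 'a set \<Rightarrow> 'b::ab_group_add set \<Rightarrow> 'b set
    \<Rightarrow> ('a \<Rightarrow> 'b) \<Rightarrow> bool" where
  "order_embedding G P H Q f \<longleftrightarrow> pos_morph G P H Q f \<and> inj_on f G \<and> f ` P = f ` G \<inter> Q"

text \<open>A generalized integer is a map from primes to {0,1,...,\<infinity>}; we use nat \<Rightarrow> enat
  and only ever look at its values at primes.\<close>
type_synonym gen_int = "nat \<Rightarrow> enat"

definition gi_mult :: "gen_int \<Rightarrow> gen_int \<Rightarrow> gen_int" where
  "gi_mult a b = (\<lambda>p. a p + b p)"

definition gi_finite :: "gen_int \<Rightarrow> bool" where
  "gi_finite a \<longleftrightarrow> (\<forall>p. prime p \<longrightarrow> a p \<noteq> \<infinity>) \<and> finite {p. prime p \<and> a p \<noteq> 0}"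

definition gi_dvd :: "gen_int \<Rightarrow> gen_int \<Rightarrow> bool" where
  "gi_dvd a b \<longleftrightarrow> (\<exists>c. \<forall>p. prime p \<longrightarrow> b p = gi_mult a c p)"

definition gi_coprime :: "gen_int \<Rightarrow> gen_int \<Rightarrow> bool" where
  "gi_coprime a b \<longleftrightarrow> (\<forall>p. prime p \<longrightarrow> a p = 0 \<or> b p = 0)"

definition gi_of_nat :: "nat \<Rightarrow> gen_int" where
  "gi_of_nat b = (\<lambda>p. enat (multiplicity p b))"

definition Z_gi :: "gen_int \<Rightarrow> rat set" where
  "Z_gi a = {of_int k / of_nat b | k b. b > 0 \<and> gi_dvd (gi_of_nat b) a}"

end

theory Submission
  imports Defs "HOL-Library.Infinite_Set" "HOL-Library.Countable"
begin

lemma gi_dvd_iff: "gi_dvd (gi_of_nat b) a \<longleftrightarrow> (\<forall>p. prime p \<longrightarrow> enat (multiplicity p b) \<le> a p)"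
proof
  assume "gi_dvd (gi_of_nat b) a"
  then obtain c where "\<forall>p. prime p \<longrightarrow> a p = gi_mult (gi_of_nat b) c p" unfolding gi_dvd_def by blast
  then show "\<forall>p. prime p \<longrightarrow> enat (multiplicity p b) \<le> a p"
    by (auto simp: gi_mult_def gi_of_nat_def)
next
  assume H: "\<forall>p. prime p \<longrightarrow> enat (multiplicity p b) \<le> a p"
  have "\<forall>p. prime p \<longrightarrow> a p = gi_mult (gi_of_nat b) (\<lambda>p. a p - enat (multiplicity p b)) p"
  proof (intro allI impI)
    fix p :: nat assume "prime p"
    with H have le: "enat (multiplicity p b) \<le> a p" by auto
    show "a p = gi_mult (gi_of_nat b) (\<lambda>p. a p - enat (multiplicity p b)) p"
      using le unfolding gi_mult_def gi_of_nat_def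
      by (cases "a p") auto
  qed
  then show "gi_dvd (gi_of_nat b) a" unfolding gi_dvd_def by blast
qed

lemma subgrp_int_mult:
  fixes A :: "rat set"
  assumes "subgrp A" "x \<in> A" shows "of_int j * x \<in> A"
proof -
  have nat: "of_nat k * x \<in> A" for k
  proof (induction k)
    case 0 then show ?case using assms by (simp add: subgrp_def)
  next
    case (Suc k)
    have "of_nat (Suc k) * x = x + of_nat k * x" by (simp add: algebra_simps)
    then show ?case using Suc assms by (simp add: subgrp_def)
  qed
  show ?thesis
  proof (cases "j \<ge> 0")
    case True
    then show ?thesis using nat[of "nat j"] by simp
  next
    case False
    then have "of_int j * x = - (of_nat (nat (-j)) * x)" by simp
    then show ?thesis using nat[of "nat (-j)"] assms by (simp add: subgrp_def)
  qed
qed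

lemma subgrp_diff: "subgrp A \<Longrightarrow> x \<in> A \<Longrightarrow> y \<in> A \<Longrightarrow> x - y \<in> A"
  unfolding subgrp_def by (metis diff_conv_add_uminus)

lemma common_denom:
  assumes "x \<in> Z_gi a" "y \<in> Z_gi a"
  shows "\<exists>B k1 k2. B > 0 \<and> gi_dvd (gi_of_nat B) a \<and> x = of_int k1 / of_nat B \<and> y = of_int k2 / of_nat B"
proof -
  obtain k b where kb: "b > 0" "gi_dvd (gi_of_nat b) a" "x = of_int k / of_nat b"
    using assms(1) unfolding Z_gi_def by blast
  obtain k' b' where kb': "b' > 0" "gi_dvd (gi_of_nat b') a" "y = of_int k' / of_nat b'"
    using assms(2) unfolding Z_gi_def by blast
  define B where "B = lcm b b'"
  have B0: "B > 0" using kb kb' by (simp add: B_def lcm_pos_nat)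
  have "gi_dvd (gi_of_nat B) a"
    unfolding gi_dvd_iff
  proof (intro allI impI)
    fix p :: nat assume p: "prime p"
    have "multiplicity p B = max (multiplicity p b) (multiplicity p b')"
      unfolding B_def using kb kb' p by (intro multiplicity_lcm) auto
    then show "enat (multiplicity p B) \<le> a p"
      using kb(2) kb'(2) p unfolding gi_dvd_iff by (auto simp: max_def)
  qed
  moreover obtain c where c: "B = b * c" unfolding B_def by (metis dvd_lcm1 dvd_def)
  moreover obtain c' where c': "B = b' * c'" unfolding B_def by (metis dvd_lcm2 dvd_def)
  moreover have "x = of_int (k * int c) / of_nat B"
    using kb c B0 by (simp add: field_simps)
  moreover have "y = of_int (k' * int c') / of_nat B"
    using kb' c' B0 by (simp add: field_simps)
  ultimately show ?thesis using B0 by blast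
qed

lemma gi_dvd_one: "gi_dvd (gi_of_nat 1) a"
  unfolding gi_dvd_iff by (simp add: enat_0)

lemma in_Z_gi: "B > 0 \<Longrightarrow> gi_dvd (gi_of_nat B) a \<Longrightarrow> of_int k / of_nat B \<in> Z_gi a"
  unfolding Z_gi_def by blast

lemma subgrp_Z_gi: "subgrp (Z_gi a)"
  unfolding subgrp_def
proof (intro conjI ballI)
  show "0 \<in> Z_gi a" using in_Z_gi[of 1 a 0] gi_dvd_one by simp
next
  fix x y assume "x \<in> Z_gi a" "y \<in> Z_gi a"
  then obtain B k1 k2 where "B > 0" "gi_dvd (gi_of_nat B) a" "x = of_int k1 / of_nat B" "y = of_int k2 / of_nat B"
    using common_denom by blast
  then show "x + y \<in> Z_gi a" using in_Z_gi[of B a "k1 + k2"] by (simp add: add_divide_distrib)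
next
  fix x assume "x \<in> Z_gi a"
  then obtain k b where "b > 0" "gi_dvd (gi_of_nat b) a" "x = of_int k / of_nat b"
    unfolding Z_gi_def by blast
  then show "- x \<in> Z_gi a" using in_Z_gi[of b a "- k"] by simp
qed

lemma one_in_Z_gi: "1 \<in> Z_gi a" using in_Z_gi[of 1 a 1] gi_dvd_one by simp

lemma inv_prime_notin:
  assumes "prime q" "a q = 0" shows "1 / of_nat q \<notin> Z_gi a"
proof
  assume "1 / of_nat q \<in> Z_gi a"
  then obtain k b where kb: "b > 0" "gi_dvd (gi_of_nat b) a" "1 / of_nat q = (of_int k / of_nat b :: rat)"
    unfolding Z_gi_def by blast
  have q0: "q > 0" using assms prime_gt_0_nat by blast
  from kb(3) have "of_nat b = (of_int k * of_nat q :: rat)" using kb(1) q0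
    by (simp add: field_simps)
  then have "int b = k * int q" by (metis of_int_eq_iff of_int_mult of_int_of_nat_eq)
  then have "int q dvd int b" by simp
  then have "q dvd b" by simp
  then have "multiplicity q b \<ge> 1" using kb(1) assms(1)
    by (metis dvd_imp_le le_zero_eq multiplicity_geI neq0_conv not_prime_unit power_one_right)
  then show False using kb(2) assms unfolding gi_dvd_iff by (metis enat_ord_simps(1) enat_0 not_one_le_zero zero_enat_def le_zero_eq one_enat_def)
qed

definition lev :: "rat set \<Rightarrow> nat \<Rightarrow> rat set" where
  "lev K D = (\<lambda>a. a / of_nat D) ` K"

definition inq :: "rat set \<Rightarrow> nat \<Rightarrow> rat \<Rightarrow> bool" where
  "inq A q x \<longleftrightarrow> (\<exists>t\<in>A. x = of_nat q * t)"

lemma subgrp_lev: "subgrp K \<Longrightarrow> subgrp (lev K D)"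
  unfolding subgrp_def lev_def
proof (intro conjI ballI)
  assume K: "0 \<in> K \<and> (\<forall>x\<in>K. \<forall>y\<in>K. x + y \<in> K) \<and> (\<forall>x\<in>K. - x \<in> K)"
  show "0 \<in> (\<lambda>a. a / of_nat D) ` K" using K by (metis div_0 image_eqI)
  fix x y assume "x \<in> (\<lambda>a. a / of_nat D) ` K" "y \<in> (\<lambda>a. a / of_nat D) ` K"
  then obtain a b where "a \<in> K" "b \<in> K" "x = a / of_nat D" "y = b / of_nat D" by blast
  then show "x + y \<in> (\<lambda>a. a / of_nat D) ` K" using K
    by (metis add_divide_distrib image_eqI)
next
  assume K: "0 \<in> K \<and> (\<forall>x\<in>K. \<forall>y\<in>K. x + y \<in> K) \<and> (\<forall>x\<in>K. - x \<in> K)"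
  fix x assume "x \<in> (\<lambda>a. a / of_nat D) ` K"
  then obtain a where "a \<in> K" "x = a / of_nat D" by blast
  then show "- x \<in> (\<lambda>a. a / of_nat D) ` K" using K
    by (metis minus_divide_left image_eqI)
qed

lemma lev_mono: assumes "subgrp K" "D > 0" "Q > 0" shows "lev K D \<subseteq> lev K (D * Q)"
proof
  fix x assume "x \<in> lev K D"
  then obtain a where a: "a \<in> K" "x = a / of_nat D" unfolding lev_def by blast
  have "of_int (int Q) * a \<in> K" using subgrp_int_mult[OF assms(1) a(1)] .
  moreover have "x = (of_int (int Q) * a) / of_nat (D * Q)" using a assms by simp
  ultimately show "x \<in> lev K (D * Q)" unfolding lev_def by blast
qed

lemma lev_dvd_mono: assumes "subgrp K" "D > 0" "D dvd D'" "D' > 0" shows "lev K D \<subseteq> lev K D'"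
  using lev_mono[OF assms(1,2), of "D' div D"] assms by (metis dvd_mult_div_cancel dvd_div_eq_0_iff neq0_conv)

lemma lev_div: assumes "x \<in> lev K D" shows "x / of_nat Q \<in> lev K (D * Q)"
proof -
  obtain a where a: "a \<in> K" "x = a / of_nat D" using assms unfolding lev_def by blast
  then have "x / of_nat Q = a / of_nat (D * Q)" by simp
  then show ?thesis using a unfolding lev_def by blast
qed

lemma K_sub_lev: assumes "subgrp K" "D > 0" shows "K \<subseteq> lev K D"
proof -
  have "K = lev K 1" unfolding lev_def by simp
  then show ?thesis using lev_mono[OF assms(1), of 1 D] assms by simp
qed

lemma lev_in_Z: assumes "D > 0" "gi_dvd (gi_of_nat D) m"
  shows "lev (Z_gi n) D \<subseteq> Z_gi (gi_mult n m)"
proof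
  fix x assume "x \<in> lev (Z_gi n) D"
  then obtain a where a: "a \<in> Z_gi n" "x = a / of_nat D" unfolding lev_def by blast
  obtain k b where kb: "b > 0" "gi_dvd (gi_of_nat b) n" "a = of_int k / of_nat b"
    using a(1) unfolding Z_gi_def by blast
  have "gi_dvd (gi_of_nat (b * D)) (gi_mult n m)"
    unfolding gi_dvd_iff
  proof (intro allI impI)
    fix p :: nat assume p: "prime p"
    have "multiplicity p (b * D) = multiplicity p b + multiplicity p D"
      using p kb(1) assms(1) by (intro prime_elem_multiplicity_mult_distrib) auto
    moreover have "enat (multiplicity p b) \<le> n p" using kb(2) p unfolding gi_dvd_iff by auto
    moreover have "enat (multiplicity p D) \<le> m p" using assms(2) p unfolding gi_dvd_iff by auto
    ultimately show "enat (multiplicity p (b * D)) \<le> gi_mult n m p"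
      unfolding gi_mult_def by (metis add_mono plus_enat_simps(1))
  qed
  moreover have "x = of_int k / of_nat (b * D)" using a kb by simp
  ultimately show "x \<in> Z_gi (gi_mult n m)" using kb(1) assms(1) in_Z_gi[of "b*D"] by simp
qed

lemma DIV_lemma:
  fixes A :: "rat set"
  assumes A: "subgrp A" and q: "prime q" and r: "r \<in> A" and nr: "\<not> inq A q r"
  shows "t \<in> A \<Longrightarrow> of_int j * r = of_nat (q ^ k) * t \<Longrightarrow> int (q ^ k) dvd j"
proof (induction k arbitrary: j t)
  case 0 then show ?case by simp
next
  case (Suc k)
  have qj: "int q dvd j"
  proof (rule ccontr)
    assume "\<not> int q dvd j"
    then have "coprime (int q) j" using q by (simp add: prime_imp_coprime_int prime_nat_iff_prime)
    then have "gcd j (int q) = 1" by (simp add: coprime_iff_gcd_eq_1 gcd.commute)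
    then obtain u v where uv: "u * j + v * int q = 1" using bezout_int[of j "int q"] by metis
    have "r = of_int u * (of_int j * r) + of_int v * of_int (int q) * r"
      using uv by (metis (no_types, opaque_lifting) mult.assoc distrib_right mult_1 of_int_1 of_int_add of_int_mult)
    also have "\<dots> = of_nat q * (of_int u * (of_nat (q ^ k) * t) + of_int v * r)"
      using Suc.prems(2) by (simp add: algebra_simps)
    finally have "r = of_nat q * (of_int u * (of_nat (q ^ k) * t) + of_int v * r)" .
    moreover have "of_int u * (of_nat (q ^ k) * t) + of_int v * r \<in> A"
    proof -
      have "of_nat (q ^ k) * t \<in> A" using subgrp_int_mult[OF A Suc.prems(1), of "int (q^k)"] by simp
      then have "of_int u * (of_nat (q ^ k) * t) \<in> A" using subgrp_int_mult[OF A] by blast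
      moreover have "of_int v * r \<in> A" using subgrp_int_mult[OF A r] by blast
      ultimately show ?thesis using A unfolding subgrp_def by blast
    qed
    ultimately show False using nr unfolding inq_def by blast
  qed
  then obtain j1 where j1: "j = int q * j1" by blast
  have q0: "(of_nat q :: rat) \<noteq> 0" using q by auto
  have "of_nat q * (of_int j1 * r) = of_nat q * (of_nat (q ^ k) * t)"
    using Suc.prems(2) j1 by (simp add: algebra_simps)
  then have "of_int j1 * r = of_nat (q ^ k) * t" using q0 by simp
  then have "int (q ^ k) dvd j1" using Suc.IH Suc.prems(1) by blast
  then show ?case using j1 by simp
qed

lemma GEN_lemma:
  assumes D: "D > 0" and q: "prime q" and r: "r \<in> lev (Z_gi n) D"
    and nr: "\<not> inq (lev (Z_gi n) D) q r" and h: "h \<in> lev (Z_gi n) (D * q ^ k)"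
  shows "\<exists>c::nat. c < q ^ k \<and> (\<exists>l \<in> lev (Z_gi n) D. h = l + of_nat c * (r / of_nat (q ^ k)))"
proof -
  define Q where "Q = q ^ k"
  have Q0: "Q > 0" using q unfolding Q_def by (simp add: prime_gt_0_nat)
  obtain \<rho> where rho: "\<rho> \<in> Z_gi n" "r = \<rho> / of_nat D" using r unfolding lev_def by blast
  obtain a where a: "a \<in> Z_gi n" "h = a / of_nat (D * Q)" using h unfolding lev_def Q_def by blast
  obtain B k1 k0 where B: "B > 0" "gi_dvd (gi_of_nat B) n" "a = of_int k1 / of_nat B" "\<rho> = of_int k0 / of_nat B"
    using common_denom[OF a(1) rho(1)] by blast
  have nk0: "\<not> int q dvd k0"
  proof
    assume "int q dvd k0"
    then obtain k0' where k0': "k0 = int q * k0'" by blast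
    have "of_int k0' / of_nat B \<in> Z_gi n" using in_Z_gi[OF B(1,2)] .
    then have "(of_int k0' / of_nat B) / of_nat D \<in> lev (Z_gi n) D" unfolding lev_def by blast
    moreover have "r = of_nat q * ((of_int k0' / of_nat B) / of_nat D)"
      using rho B k0' by simp
    ultimately show False using nr unfolding inq_def by blast
  qed
  have "coprime (int q) k0" using nk0 q by (simp add: prime_imp_coprime_int prime_nat_iff_prime)
  then have "coprime k0 (int Q)" unfolding Q_def by (simp add: coprime_commute)
  then have "gcd k0 (int Q) = 1" by simp
  then obtain u v where uv: "u * k0 + v * int Q = 1" using bezout_int[of k0 "int Q"] by metis
  define c where "c = (u * k1) mod int Q"
  have c0: "c \<ge> 0" "c < int Q" using Q0 unfolding c_def by auto
  have "int Q dvd (k1 - c * k0)"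
  proof -
    define w where "w = (u * k1) div int Q"
    have cw: "c = u * k1 - int Q * w" unfolding c_def w_def by (metis minus_mult_div_eq_mod)
    have e1: "1 - u * k0 = v * int Q" using uv by linarith
    have "k1 - c * k0 = k1 * (1 - u * k0) + int Q * w * k0"
      unfolding cw by (simp add: algebra_simps)
    also have "\<dots> = int Q * (k1 * v + w * k0)"
      unfolding e1 by (simp add: algebra_simps)
    finally show ?thesis by simp
  qed
  then obtain t where t: "k1 - c * k0 = int Q * t" by blast
  define l where "l = (of_int t / of_nat B) / (of_nat D :: rat)"
  have l: "l \<in> lev (Z_gi n) D" unfolding l_def lev_def using in_Z_gi[OF B(1,2)] by blast
  have "h = l + of_int c * (r / of_nat Q)"
  proof -
    have k1e: "(of_int k1 :: rat) = of_int (int Q) * of_int t + of_int c * of_int k0"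
      using t by (metis add_diff_cancel_right' diff_add_cancel of_int_add of_int_mult)
    have "h = of_int k1 / of_nat B / (of_nat D * of_nat Q)" using a B by simp
    also have "\<dots> = (of_nat Q * of_int t + of_int c * of_int k0) / (of_nat B * of_nat D * of_nat Q)"
      unfolding k1e by (simp add: mult.assoc)
    also have "\<dots> = (of_nat Q * of_int t) / (of_nat B * of_nat D * of_nat Q) + (of_int c * of_int k0) / (of_nat B * of_nat D * of_nat Q)"
      by (rule add_divide_distrib)
    also have "(of_nat Q * of_int t) / (of_nat B * of_nat D * of_nat Q) = l"
      unfolding l_def using Q0 by simp
    also have "(of_int c * of_int k0) / (of_nat B * of_nat D * of_nat Q) = of_int c * (r / of_nat Q)"
      unfolding rho B by simp
    finally show ?thesis .
  qed
  moreover have "of_int c = (of_nat (nat c) :: rat)" using c0 by simp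
  moreover have "nat c < q ^ k" using c0 unfolding Q_def by linarith
  ultimately show ?thesis using l unfolding Q_def by metis
qed

definition adj :: "rat set \<Rightarrow> rat \<Rightarrow> rat \<Rightarrow> rat \<Rightarrow> rat \<Rightarrow> rat set" where
  "adj T w1 w2 w3 w4 = {t + of_nat n1 * w1 + of_nat n2 * w2 + of_nat n3 * w3 + of_nat n4 * w4
      | t n1 n2 n3 n4. t \<in> T}"

lemma cone_nat_mult:
  assumes "0 \<in> T" "\<forall>a\<in>T. \<forall>b\<in>T. a + b \<in> T" "t \<in> T"
  shows "of_nat N * t \<in> T"
proof (induction N)
  case 0 then show ?case using assms by simp
next
  case (Suc N)
  have "of_nat (Suc N) * t = t + of_nat N * t" by (simp add: algebra_simps)
  then show ?case using Suc assms by simp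
qed

lemma pair_reduce:
  fixes T L :: "rat set" and w1 w2 w3 w4 x y1 y2 r :: rat and Q :: nat
  assumes Tadd: "\<forall>a\<in>T. \<forall>b\<in>T. a + b \<in> T" and TL: "T \<subseteq> L" and L: "subgrp L"
    and w2: "w2 = x - w1" and w3: "w3 = y1 - w1" and w4: "w4 = y2 - x + w1"
    and xT: "x \<in> T" and y1T: "y1 \<in> T" and y2T: "y2 \<in> T" and zT: "y1 + y2 - x \<in> T"
    and Q0: "Q > 0" and Qw: "of_nat Q * w1 = r"
    and DIVH: "\<And>j::nat. of_nat j * w1 \<in> L \<Longrightarrow> Q dvd j"
    and AP1: "\<And>j. j \<le> Q \<Longrightarrow> r + of_nat j * (y2 - x) \<in> T"
    and AP2: "\<And>j. j \<le> Q \<Longrightarrow> of_nat Q * x - r + of_nat j * (y1 - x) \<in> T"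
  shows "t \<in> T \<Longrightarrow> n1 + n2 + n3 + n4 = N \<Longrightarrow>
     t + of_nat n1 * w1 + of_nat n2 * w2 + of_nat n3 * w3 + of_nat n4 * w4 \<in> L \<Longrightarrow>
     t + of_nat n1 * w1 + of_nat n2 * w2 + of_nat n3 * w3 + of_nat n4 * w4 \<in> T"
proof (induction N arbitrary: t n1 n2 n3 n4 rule: less_induct)
  case (less N)
  define v where "v = t + of_nat n1 * w1 + of_nat n2 * w2 + of_nat n3 * w3 + of_nat n4 * w4"
  have tL: "t \<in> L" using less.prems(1) TL by blast
  have xL: "x \<in> L" "y1 \<in> L" "y2 \<in> L" using xT y1T y2T TL by auto
  have vL: "v \<in> L" using less.prems(3) unfolding v_def .
  have IH': "v \<in> T" if "M < N" "t' \<in> T" "a + b + c + d = M"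
      "v = t' + of_nat a * w1 + of_nat b * w2 + of_nat c * w3 + of_nat d * w4" for M t' a b c d
  proof -
    have "t' + of_nat a * w1 + of_nat b * w2 + of_nat c * w3 + of_nat d * w4 \<in> L" using vL that(4) by simp
    then show ?thesis using less.IH[OF that(1,2,3)] that(4) by simp
  qed
  have "v \<in> T"
  proof (cases "n1 > 0 \<and> n2 > 0")
    case True
    have "v = (t + x) + of_nat (n1 - 1) * w1 + of_nat (n2 - 1) * w2 + of_nat n3 * w3 + of_nat n4 * w4"
    proof -
      obtain a b where ab: "n1 = Suc a" "n2 = Suc b" using True by (metis gr0_conv_Suc)
      show ?thesis unfolding v_def w2 ab by (simp add: algebra_simps)
    qed
    moreover have "t + x \<in> T" using Tadd less.prems(1) xT by blast
    ultimately show ?thesis using IH'[of "N - 2" "t + x" "n1 - 1" "n2 - 1" n3 n4] less.prems(2) True by simp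
  next
    case c1: False
    show ?thesis
    proof (cases "n1 > 0 \<and> n3 > 0")
      case True
      have "v = (t + y1) + of_nat (n1 - 1) * w1 + of_nat n2 * w2 + of_nat (n3 - 1) * w3 + of_nat n4 * w4"
      proof -
        obtain a b where ab: "n1 = Suc a" "n3 = Suc b" using True by (metis gr0_conv_Suc)
        show ?thesis unfolding v_def w3 ab by (simp add: algebra_simps)
      qed
      moreover have "t + y1 \<in> T" using Tadd less.prems(1) y1T by blast
      ultimately show ?thesis using IH'[of "N - 2" "t + y1" "n1 - 1" n2 "n3 - 1" n4] less.prems(2) True by simp
    next
      case c2: False
      show ?thesis
      proof (cases "n4 > 0 \<and> n2 > 0")
        case True
        have "v = (t + y2) + of_nat n1 * w1 + of_nat (n2 - 1) * w2 + of_nat n3 * w3 + of_nat (n4 - 1) * w4"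
        proof -
          obtain a b where ab: "n4 = Suc a" "n2 = Suc b" using True by (metis gr0_conv_Suc)
          show ?thesis unfolding v_def w2 w4 ab by (simp add: algebra_simps)
        qed
        moreover have "t + y2 \<in> T" using Tadd less.prems(1) y2T by blast
        ultimately show ?thesis using IH'[of "N - 2" "t + y2" n1 "n2 - 1" n3 "n4 - 1"] less.prems(2) True by simp
      next
        case c3: False
        show ?thesis
        proof (cases "n4 > 0 \<and> n3 > 0")
          case True
          have "v = (t + (y1 + y2 - x)) + of_nat n1 * w1 + of_nat n2 * w2 + of_nat (n3 - 1) * w3 + of_nat (n4 - 1) * w4"
          proof -
            obtain a b where ab: "n4 = Suc a" "n3 = Suc b" using True by (metis gr0_conv_Suc)
            show ?thesis unfolding v_def w3 w4 ab by (simp add: algebra_simps)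
          qed
          moreover have "t + (y1 + y2 - x) \<in> T" using Tadd less.prems(1) zT by blast
          ultimately show ?thesis using IH'[of "N - 2" "t + (y1 + y2 - x)" n1 n2 "n3 - 1" "n4 - 1"] less.prems(2) True by simp
        next
          case c4: False
          have cases: "(n2 = 0 \<and> n3 = 0) \<or> (n1 = 0 \<and> n4 = 0)" using c1 c2 c3 c4 by auto
          then show ?thesis
          proof
            assume n23: "n2 = 0 \<and> n3 = 0"
            have v2: "v = t + of_nat n1 * w1 + of_nat n4 * w4" unfolding v_def using n23 by simp
            have "of_nat (n1 + n4) * w1 = v - t - of_nat n4 * (y2 - x)"
              unfolding v2 w4 by (simp add: algebra_simps)
            moreover have "v - t - of_nat n4 * (y2 - x) \<in> L"
            proof -
              have "y2 - x \<in> L" using subgrp_diff[OF L xL(3) xL(1)] .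
              then have "of_nat n4 * (y2 - x) \<in> L" using subgrp_int_mult[OF L, of "y2 - x" "int n4"] by simp
              then show ?thesis using subgrp_diff[OF L subgrp_diff[OF L vL tL]] by simp
            qed
            ultimately have "Q dvd (n1 + n4)" using DIVH[of "n1 + n4"] by simp
            show ?thesis
            proof (cases "n1 + n4 = 0")
              case True
              then show ?thesis using less.prems(1) v2 by simp
            next
              case False
              with \<open>Q dvd (n1 + n4)\<close> have QN: "Q \<le> n1 + n4" by (simp add: dvd_imp_le)
              show ?thesis
              proof (cases "Q \<le> n1")
                case True
                have "v = (t + r) + of_nat (n1 - Q) * w1 + of_nat 0 * w2 + of_nat 0 * w3 + of_nat n4 * w4"
                proof -
                  obtain a where a: "n1 = Q + a" using True le_Suc_ex by blast
                  show ?thesis unfolding v2 a Qw[symmetric] by (simp add: algebra_simps)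
                qed
                moreover have "t + r \<in> T" using Tadd less.prems(1) AP1[of 0] by simp
                moreover have "n1 - Q + 0 + 0 + n4 < N" using True Q0 less.prems(2) n23 by linarith
                ultimately show ?thesis using IH'[of "n1 - Q + 0 + 0 + n4" "t + r" "n1 - Q" 0 0 n4] less.prems(2) by simp
              next
                case False
                define j where "j = Q - n1"
                have jQ: "j \<le> Q" unfolding j_def by simp
                have "v = (t + (r + of_nat j * (y2 - x))) + of_nat 0 * w1 + of_nat 0 * w2 + of_nat 0 * w3 + of_nat (n4 - j) * w4"
                proof -
                  have n1j: "n1 + j = Q" using False unfolding j_def by simp
                  obtain a where a: "n4 = j + a" using False QN unfolding j_def using le_Suc_ex
                    by (metis add.commute nat_le_linear add_diff_inverse_nat le_add_diff_inverse2 add_le_cancel_left)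
                  have rr: "r = of_nat n1 * w1 + of_nat j * w1" unfolding Qw[symmetric] n1j[symmetric] by (simp add: algebra_simps)
                  have "v = t + (of_nat n1 * w1 + of_nat j * w1) + of_nat j * (y2 - x) + of_nat a * w4"
                    unfolding v2 a w4 by (simp add: algebra_simps)
                  then show ?thesis unfolding rr a by simp
                qed
                moreover have "t + (r + of_nat j * (y2 - x)) \<in> T" using Tadd less.prems(1) AP1[OF jQ] by simp
                moreover have "0 + 0 + 0 + (n4 - j) < N" using False Q0 QN less.prems(2) n23 unfolding j_def by linarith
                ultimately show ?thesis using IH'[of "0 + 0 + 0 + (n4 - j)" "t + (r + of_nat j * (y2 - x))" 0 0 0 "n4 - j"] less.prems(2) by simp
              qed
            qed
          next
            assume n14: "n1 = 0 \<and> n4 = 0"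
            have v2: "v = t + of_nat n2 * w2 + of_nat n3 * w3" unfolding v_def using n14 by simp
            have "of_nat (n2 + n3) * w1 = t + of_nat n2 * x + of_nat n3 * y1 - v"
              unfolding v2 w2 w3 by (simp add: algebra_simps)
            moreover have "t + of_nat n2 * x + of_nat n3 * y1 - v \<in> L"
            proof -
              have a1: "of_nat n2 * x \<in> L" using subgrp_int_mult[OF L xL(1), of "int n2"] by simp
              have a2: "of_nat n3 * y1 \<in> L" using subgrp_int_mult[OF L xL(2), of "int n3"] by simp
              have "t + of_nat n2 * x \<in> L" using tL a1 L unfolding subgrp_def by blast
              then have "t + of_nat n2 * x + of_nat n3 * y1 \<in> L" using a2 L unfolding subgrp_def by blast
              then show ?thesis using subgrp_diff[OF L _ vL] by blast
            qed
            ultimately have "Q dvd (n2 + n3)" using DIVH[of "n2 + n3"] by simp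
            show ?thesis
            proof (cases "n2 + n3 = 0")
              case True
              then show ?thesis using less.prems(1) v2 by simp
            next
              case False
              with \<open>Q dvd (n2 + n3)\<close> have QN: "Q \<le> n2 + n3" by (simp add: dvd_imp_le)
              show ?thesis
              proof (cases "Q \<le> n2")
                case True
                have "v = (t + (of_nat Q * x - r + of_nat 0 * (y1 - x))) + of_nat 0 * w1 + of_nat (n2 - Q) * w2 + of_nat n3 * w3 + of_nat 0 * w4"
                proof -
                  obtain a where a: "n2 = Q + a" using True le_Suc_ex by blast
                  show ?thesis unfolding v2 a Qw[symmetric] w2 by (simp add: algebra_simps)
                qed
                moreover have "t + (of_nat Q * x - r + of_nat 0 * (y1 - x)) \<in> T" using Tadd less.prems(1) AP2[of 0] by simp
                moreover have "0 + (n2 - Q) + n3 + 0 < N" using True Q0 less.prems(2) n14 by linarith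
                ultimately show ?thesis using IH'[of "0 + (n2 - Q) + n3 + 0" "t + (of_nat Q * x - r + of_nat 0 * (y1 - x))" 0 "n2 - Q" n3 0] less.prems(2) by simp
              next
                case False
                define j where "j = Q - n2"
                have jQ: "j \<le> Q" unfolding j_def by simp
                have "v = (t + (of_nat Q * x - r + of_nat j * (y1 - x))) + of_nat 0 * w1 + of_nat 0 * w2 + of_nat (n3 - j) * w3 + of_nat 0 * w4"
                proof -
                  have n2j: "n2 + j = Q" using False unfolding j_def by simp
                  obtain a where a: "n3 = j + a" using False QN unfolding j_def using le_Suc_ex
                    by (metis add.commute nat_le_linear add_diff_inverse_nat le_add_diff_inverse2 add_le_cancel_left)
                  have rr: "of_nat Q * x - r = of_nat n2 * (x - w1) + of_nat j * (x - w1)" unfolding Qw[symmetric] n2j[symmetric] by (simp add: algebra_simps)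
                  have "v = t + (of_nat n2 * (x - w1) + of_nat j * (x - w1)) + of_nat j * (y1 - x) + of_nat a * w3"
                    unfolding v2 a w3 w2 by (simp add: algebra_simps)
                  then show ?thesis unfolding rr a w2 by simp
                qed
                moreover have "t + (of_nat Q * x - r + of_nat j * (y1 - x)) \<in> T" using Tadd less.prems(1) AP2[OF jQ] by simp
                moreover have "0 + 0 + (n3 - j) + 0 < N" using False Q0 QN less.prems(2) n14 unfolding j_def by linarith
                ultimately show ?thesis using IH'[of "0 + 0 + (n3 - j) + 0" "t + (of_nat Q * x - r + of_nat j * (y1 - x))" 0 0 "n3 - j" 0] less.prems(2) by simp
              qed
            qed
          qed
        qed
      qed
    qed
  qed
  then show ?case unfolding v_def .
qed

definition invs :: "gen_int \<Rightarrow> gen_int \<Rightarrow> rat set \<Rightarrow> nat \<Rightarrow> rat set \<Rightarrow> bool" where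
  "invs n m S D T \<longleftrightarrow> D > 0 \<and> gi_dvd (gi_of_nat D) m \<and> T \<subseteq> lev (Z_gi n) D \<and> 0 \<in> T
    \<and> (\<forall>a\<in>T. \<forall>b\<in>T. a + b \<in> T) \<and> (\<forall>t\<in>T. 0 \<le> t) \<and> T \<inter> Z_gi n = S
    \<and> (\<forall>u\<in>T. u \<noteq> 0 \<longrightarrow> (\<forall>h\<in>lev (Z_gi n) D. \<exists>N::nat. h + of_nat N * u \<in> T \<and> of_nat N * u - h \<in> T))"

lemma adj_intro: "t \<in> T \<Longrightarrow> t + of_nat n1 * w1 + of_nat n2 * w2 + of_nat n3 * w3 + of_nat n4 * w4 \<in> adj T w1 w2 w3 w4"
  unfolding adj_def by blast

lemma adj_elim: "v \<in> adj T w1 w2 w3 w4 \<Longrightarrow> \<exists>t n1 n2 n3 n4. t \<in> T \<and> v = t + of_nat n1 * w1 + of_nat n2 * w2 + of_nat n3 * w3 + of_nat n4 * w4"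
  unfolding adj_def by blast

lemma subgrp_add: "subgrp A \<Longrightarrow> x \<in> A \<Longrightarrow> y \<in> A \<Longrightarrow> x + y \<in> A"
  unfolding subgrp_def by blast

lemma subgrp_nat_mult: "subgrp (A::rat set) \<Longrightarrow> x \<in> A \<Longrightarrow> of_nat j * x \<in> A"
  using subgrp_int_mult[of A x "int j"] by simp

lemma ADJ:
  assumes inv: "invs n m S D T" and q: "prime q" and Qd: "Q = q ^ k"
    and dv: "gi_dvd (gi_of_nat (D * Q)) m"
    and xT: "x \<in> T" and y1T: "y1 \<in> T" and y2T: "y2 \<in> T" and zT: "y1 + y2 - x \<in> T"
    and r: "r \<in> lev (Z_gi n) D" and nr: "\<not> inq (lev (Z_gi n) D) q r"
    and AP1: "\<And>j. j \<le> Q \<Longrightarrow> r + of_nat j * (y2 - x) \<in> T"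
    and AP2: "\<And>j. j \<le> Q \<Longrightarrow> of_nat Q * x - r + of_nat j * (y1 - x) \<in> T"
    and w1: "w1 = r / of_nat Q"
  shows "invs n m S (D * Q) (adj T w1 (x - w1) (y1 - w1) (y2 - x + w1))
    \<and> T \<subseteq> adj T w1 (x - w1) (y1 - w1) (y2 - x + w1)
    \<and> w1 \<in> adj T w1 (x - w1) (y1 - w1) (y2 - x + w1)
    \<and> x - w1 \<in> adj T w1 (x - w1) (y1 - w1) (y2 - x + w1)
    \<and> y1 - w1 \<in> adj T w1 (x - w1) (y1 - w1) (y2 - x + w1)
    \<and> y2 - x + w1 \<in> adj T w1 (x - w1) (y1 - w1) (y2 - x + w1)"
proof -
  define K where "K = Z_gi n"
  define L where "L = lev K D"
  define L' where "L' = lev K (D * Q)"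
  define w2 where "w2 = x - w1"
  define w3 where "w3 = y1 - w1"
  define w4 where "w4 = y2 - x + w1"
  define A where "A = adj T w1 w2 w3 w4"
  have K: "subgrp K" unfolding K_def by (rule subgrp_Z_gi)
  have L: "subgrp L" unfolding L_def using subgrp_lev[OF K] .
  have L': "subgrp L'" unfolding L'_def using subgrp_lev[OF K] .
  have D0: "D > 0" using inv unfolding invs_def by blast
  have Q0: "Q > 0" using q Qd by (simp add: prime_gt_0_nat)
  have TL: "T \<subseteq> L" using inv unfolding invs_def L_def K_def by blast
  have T0: "0 \<in> T" and Tadd: "\<forall>a\<in>T. \<forall>b\<in>T. a + b \<in> T" and Tnn: "\<forall>t\<in>T. 0 \<le> t"
    and TS: "T \<inter> K = S" using inv unfolding invs_def K_def by blast+
  have Tsimp: "\<forall>u\<in>T. u \<noteq> 0 \<longrightarrow> (\<forall>h\<in>L. \<exists>N::nat. h + of_nat N * u \<in> T \<and> of_nat N * u - h \<in> T)"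
    using inv unfolding invs_def L_def K_def by blast
  have LL': "L \<subseteq> L'" unfolding L_def L'_def using lev_mono[OF K D0 Q0] .
  have rT: "r \<in> T" using AP1[of 0] by simp
  have Qw: "of_nat Q * w1 = r" unfolding w1 using Q0 by simp
  have w1L': "w1 \<in> L'" unfolding w1 L'_def using lev_div r unfolding K_def L_def by blast
  have xL: "x \<in> L" "y1 \<in> L" "y2 \<in> L" using xT y1T y2T TL by auto
  have wL': "w1 \<in> L'" "w2 \<in> L'" "w3 \<in> L'" "w4 \<in> L'"
    using w1L' xL LL' L' unfolding w2_def w3_def w4_def
    by (auto intro!: subgrp_add subgrp_diff)
  have Qw1: "of_nat Q * w1 \<in> T" using Qw rT by simp
  have Qw2: "of_nat Q * w2 \<in> T"
  proof -
    have "of_nat Q * w2 = of_nat Q * x - r + of_nat 0 * (y1 - x)" unfolding w2_def Qw[symmetric] by (simp add: algebra_simps)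
    then show ?thesis using AP2[of 0] by simp
  qed
  have Qw3: "of_nat Q * w3 \<in> T"
  proof -
    have "of_nat Q * w3 = of_nat Q * x - r + of_nat Q * (y1 - x)" unfolding w3_def Qw[symmetric] by (simp add: algebra_simps)
    then show ?thesis using AP2[of Q] by simp
  qed
  have Qw4: "of_nat Q * w4 \<in> T"
  proof -
    have "of_nat Q * w4 = r + of_nat Q * (y2 - x)" unfolding w4_def Qw[symmetric] by (simp add: algebra_simps)
    then show ?thesis using AP1[of Q] by simp
  qed
  have wnn: "0 \<le> w1" "0 \<le> w2" "0 \<le> w3" "0 \<le> w4"
    using Qw1 Qw2 Qw3 Qw4 Tnn Q0 by (auto simp: zero_le_mult_iff)
  have Ain: "t + of_nat n1 * w1 + of_nat n2 * w2 + of_nat n3 * w3 + of_nat n4 * w4 \<in> A" if "t \<in> T" for t n1 n2 n3 n4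
    unfolding A_def using adj_intro[OF that] .
  have TA: "T \<subseteq> A"
  proof
    fix t assume "t \<in> T" then show "t \<in> A" using Ain[of t 0 0 0 0] by simp
  qed
  have wA: "w1 \<in> A" "w2 \<in> A" "w3 \<in> A" "w4 \<in> A"
    using Ain[OF T0, of 1 0 0 0] Ain[OF T0, of 0 1 0 0] Ain[OF T0, of 0 0 1 0] Ain[OF T0, of 0 0 0 1] by simp_all
  have A0: "0 \<in> A" using TA T0 by blast
  have Aadd: "\<forall>a\<in>A. \<forall>b\<in>A. a + b \<in> A"
  proof (intro ballI)
    fix a b assume "a \<in> A" "b \<in> A"
    then obtain t n1 n2 n3 n4 t' n1' n2' n3' n4' where
      a: "t \<in> T" "a = t + of_nat n1 * w1 + of_nat n2 * w2 + of_nat n3 * w3 + of_nat n4 * w4" and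
      b: "t' \<in> T" "b = t' + of_nat n1' * w1 + of_nat n2' * w2 + of_nat n3' * w3 + of_nat n4' * w4"
      unfolding A_def using adj_elim by metis
    have "a + b = (t + t') + of_nat (n1 + n1') * w1 + of_nat (n2 + n2') * w2 + of_nat (n3 + n3') * w3 + of_nat (n4 + n4') * w4"
      unfolding a b by (simp add: algebra_simps)
    moreover have "t + t' \<in> T" using a b Tadd by blast
    ultimately show "a + b \<in> A" using Ain[of "t + t'" "n1 + n1'" "n2 + n2'" "n3 + n3'" "n4 + n4'"] by simp
  qed
  have Ann: "\<forall>v\<in>A. 0 \<le> v"
  proof
    fix v assume "v \<in> A"
    then obtain t n1 n2 n3 n4 where a: "t \<in> T" "v = t + of_nat n1 * w1 + of_nat n2 * w2 + of_nat n3 * w3 + of_nat n4 * w4"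
      unfolding A_def using adj_elim by metis
    have "0 \<le> t" using a Tnn by blast
    then show "0 \<le> v" unfolding a using wnn by simp
  qed
  have AL': "A \<subseteq> L'"
  proof
    fix v assume "v \<in> A"
    then obtain t n1 n2 n3 n4 where a: "t \<in> T" "v = t + of_nat n1 * w1 + of_nat n2 * w2 + of_nat n3 * w3 + of_nat n4 * w4"
      unfolding A_def using adj_elim by metis
    have "t \<in> L'" using a TL LL' by blast
    then show "v \<in> L'" unfolding a using wL' L' by (intro subgrp_add subgrp_nat_mult) auto
  qed
  have DIVH: "Q dvd j" if "of_nat j * w1 \<in> L" for j :: nat
  proof -
    have "of_int (int j) * r = of_nat (q ^ k) * (of_nat j * w1)" unfolding Qd[symmetric] Qw[symmetric] by simp
    then have "int (q ^ k) dvd int j" using DIV_lemma[OF L q _ _ that] r nr unfolding L_def K_def by blast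
    then show ?thesis unfolding Qd using int_dvd_int_iff by blast
  qed
  have AL: "A \<inter> L = T"
  proof
    show "A \<inter> L \<subseteq> T"
    proof
      fix v assume v: "v \<in> A \<inter> L"
      then obtain t n1 n2 n3 n4 where a: "t \<in> T" "v = t + of_nat n1 * w1 + of_nat n2 * w2 + of_nat n3 * w3 + of_nat n4 * w4"
        unfolding A_def using adj_elim by blast
      show "v \<in> T"
        using pair_reduce[OF Tadd TL L w2_def w3_def w4_def xT y1T y2T zT Q0 Qw DIVH AP1 AP2 a(1) refl] v a(2)
        by simp
    qed
    show "T \<subseteq> A \<inter> L" using TA TL by blast
  qed
  have KL: "K \<subseteq> L" unfolding L_def using K_sub_lev[OF K D0] .
  have AK: "A \<inter> K = S"
  proof -
    have "A \<inter> K = A \<inter> L \<inter> K" using KL by blast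
    then show ?thesis using AL TS by simp
  qed
  have Asimp: "\<forall>u\<in>A. u \<noteq> 0 \<longrightarrow> (\<forall>h\<in>L'. \<exists>N::nat. h + of_nat N * u \<in> A \<and> of_nat N * u - h \<in> A)"
  proof (intro ballI impI)
    fix u h assume uA: "u \<in> A" and u0: "u \<noteq> 0" and hL: "h \<in> L'"
    obtain t n1 n2 n3 n4 where a: "t \<in> T" "u = t + of_nat n1 * w1 + of_nat n2 * w2 + of_nat n3 * w3 + of_nat n4 * w4"
      using uA unfolding A_def using adj_elim by metis
    define u0 where "u0 = of_nat Q * u"
    have "u0 = of_nat Q * t + of_nat n1 * (of_nat Q * w1) + of_nat n2 * (of_nat Q * w2) + of_nat n3 * (of_nat Q * w3) + of_nat n4 * (of_nat Q * w4)"
      unfolding u0_def a by (simp add: algebra_simps)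
    moreover have "of_nat Q * t \<in> T" using cone_nat_mult[OF T0 Tadd a(1)] .
    moreover have "of_nat n1 * (of_nat Q * w1) \<in> T" "of_nat n2 * (of_nat Q * w2) \<in> T"
       "of_nat n3 * (of_nat Q * w3) \<in> T" "of_nat n4 * (of_nat Q * w4) \<in> T"
      using cone_nat_mult[OF T0 Tadd] Qw1 Qw2 Qw3 Qw4 by blast+
    ultimately have u0T: "u0 \<in> T" using Tadd by simp
    have u00: "u0 \<noteq> 0" unfolding u0_def using u0 Q0 by simp
    obtain c l where cl: "c < Q" "l \<in> L" "h = l + of_nat c * w1"
      using GEN_lemma[OF D0 q r nr, of h k] hL unfolding L'_def L_def K_def Qd w1 by blast
    obtain N1 where N1: "l + of_nat N1 * u0 \<in> T" using Tsimp u0T u00 cl(2) by blast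
    have lr: "l + r \<in> L" using cl(2) r L unfolding L_def K_def by (simp add: subgrp_add)
    obtain N2 where N2: "of_nat N2 * u0 - (l + r) \<in> T" using Tsimp u0T u00 lr by blast
    define N where "N = Q * (N1 + N2)"
    have Nu: "of_nat N * u = of_nat N1 * u0 + of_nat N2 * u0" unfolding N_def u0_def by (simp add: algebra_simps)
    have "h + of_nat N * u = ((l + of_nat N1 * u0) + of_nat N2 * u0) + of_nat c * w1 + of_nat 0 * w2 + of_nat 0 * w3 + of_nat 0 * w4"
      unfolding Nu cl(3) by (simp add: algebra_simps)
    moreover have "(l + of_nat N1 * u0) + of_nat N2 * u0 \<in> T" using N1 cone_nat_mult[OF T0 Tadd u0T] Tadd by blast
    ultimately have up: "h + of_nat N * u \<in> A" using Ain[of "(l + of_nat N1 * u0) + of_nat N2 * u0" c 0 0 0] by simp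
    have "of_nat N * u - h = ((of_nat N2 * u0 - (l + r)) + of_nat N1 * u0) + of_nat (Q - c) * w1 + of_nat 0 * w2 + of_nat 0 * w3 + of_nat 0 * w4"
    proof -
      have "of_nat (Q - c) * w1 = r - of_nat c * w1" using cl(1) Qw[symmetric] by (simp add: of_nat_diff algebra_simps)
      then show ?thesis unfolding Nu cl(3) by (simp add: algebra_simps)
    qed
    moreover have "(of_nat N2 * u0 - (l + r)) + of_nat N1 * u0 \<in> T" using N2 cone_nat_mult[OF T0 Tadd u0T] Tadd by blast
    ultimately have lo: "of_nat N * u - h \<in> A" using Ain[of "(of_nat N2 * u0 - (l + r)) + of_nat N1 * u0" "Q - c" 0 0 0] by simp
    show "\<exists>N::nat. h + of_nat N * u \<in> A \<and> of_nat N * u - h \<in> A" using up lo by blast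
  qed
  have DQ: "D * Q > 0" using D0 Q0 by simp
  have "invs n m S (D * Q) A"
    unfolding invs_def using DQ dv AL' A0 Aadd Ann AK Asimp unfolding L'_def K_def by blast
  then show ?thesis using TA wA unfolding A_def w2_def w3_def w4_def by blast
qed

lemma enat_one_le: "(x::enat) \<noteq> 0 \<Longrightarrow> enat 1 \<le> x"
  by (cases x) (auto simp: zero_enat_def one_enat_def)

lemma big_prime_power:
  assumes minf: "\<not> gi_finite m" and D0: "D > 0" and dD: "gi_dvd (gi_of_nat D) m"
  shows "\<exists>q k. prime q \<and> m q \<noteq> 0 \<and> q ^ k \<ge> M \<and> gi_dvd (gi_of_nat (D * q ^ k)) m"
proof (cases "\<exists>p. prime p \<and> m p = \<infinity>")
  case True
  then obtain p where p: "prime p" "m p = \<infinity>" by blast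
  have "M < 2 ^ M" by (rule less_exp)
  also have "2 ^ M \<le> p ^ M" using prime_ge_2_nat[OF p(1)] by (simp add: power_mono)
  finally have pM: "p ^ M \<ge> M" by simp
  have "gi_dvd (gi_of_nat (D * p ^ M)) m"
    unfolding gi_dvd_iff
  proof (intro allI impI)
    fix p' :: nat assume p': "prime p'"
    have "multiplicity p' (D * p ^ M) = multiplicity p' D + multiplicity p' (p ^ M)"
      using p' D0 p(1) by (intro prime_elem_multiplicity_mult_distrib) (auto simp: prime_gt_0_nat)
    then show "enat (multiplicity p' (D * p ^ M)) \<le> m p'"
    proof (cases "p' = p")
      case True then show ?thesis using p by simp
    next
      case False
      then have "multiplicity p' (p ^ M) = 0" using multiplicity_distinct_prime_power p p' by blast
      then show ?thesis using \<open>multiplicity p' (D * p ^ M) = _\<close> dD p' unfolding gi_dvd_iff by simp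
    qed
  qed
  then show ?thesis using p pM by (intro exI[of _ p] exI[of _ M]) auto
next
  case False
  then have "infinite {p. prime p \<and> m p \<noteq> 0}" using minf unfolding gi_finite_def by auto
  then obtain p where p: "p > max M D" "prime p" "m p \<noteq> 0" unfolding infinite_nat_iff_unbounded by blast
  have pD: "\<not> p dvd D" using p(1) D0 by (metis dvd_imp_le max.strict_boundedE not_le)
  have "gi_dvd (gi_of_nat (D * p ^ 1)) m"
    unfolding gi_dvd_iff
  proof (intro allI impI)
    fix p' :: nat assume p': "prime p'"
    have eq: "multiplicity p' (D * p) = multiplicity p' D + multiplicity p' p"
      using p' D0 p(2) by (intro prime_elem_multiplicity_mult_distrib) (auto simp: prime_gt_0_nat)
    show "enat (multiplicity p' (D * p ^ 1)) \<le> m p'"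
    proof (cases "p' = p")
      case True
      then have "multiplicity p' D = 0" using pD by (simp add: not_dvd_imp_multiplicity_0)
      then show ?thesis using eq True p(2,3) enat_one_le by simp
    next
      case False
      then have "multiplicity p' p = 0" using multiplicity_distinct_prime_power[OF p' p(2), of 1] by simp
      then show ?thesis using eq dD p' unfolding gi_dvd_iff by simp
    qed
  qed
  moreover have "p ^ 1 \<ge> M" using p(1) by simp
  ultimately show ?thesis using p by blast
qed

lemma rat_repr: "\<exists>a b. b > 0 \<and> (v::rat) = of_int a / of_int b"
proof -
  obtain a b where ab: "quotient_of v = (a, b)" by (cases "quotient_of v") auto
  then show ?thesis using quotient_of_denom_pos[OF ab] quotient_of_div[OF ab] by blast
qed

lemma gcd_comb:
  fixes k1 k2 k3 k4 :: int
  shows "\<exists>c1 c2 c3 c4. c1 * k1 + c2 * k2 + c3 * k3 + c4 * k4 = gcd k1 (gcd k2 (gcd k3 k4))"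
proof -
  obtain u1 v1 where 1: "u1 * k3 + v1 * k4 = gcd k3 k4" using bezout_int by blast
  obtain u2 v2 where 2: "u2 * k2 + v2 * gcd k3 k4 = gcd k2 (gcd k3 k4)" using bezout_int by blast
  obtain u3 v3 where 3: "u3 * k1 + v3 * gcd k2 (gcd k3 k4) = gcd k1 (gcd k2 (gcd k3 k4))" using bezout_int by blast
  have "u3 * k1 + v3 * (u2 * k2 + v2 * (u1 * k3 + v1 * k4)) = gcd k1 (gcd k2 (gcd k3 k4))"
    by (simp only: 1 2 3)
  then have "u3 * k1 + (v3 * u2) * k2 + (v3 * v2 * u1) * k3 + (v3 * v2 * v1) * k4 = gcd k1 (gcd k2 (gcd k3 k4))"
    by (simp add: algebra_simps)
  then show ?thesis by blast
qed

lemma cyclic_gen: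
  fixes L :: "rat set"
  assumes L: "subgrp L" and v: "v1 \<in> L" "v2 \<in> L" "v3 \<in> L" "v4 \<in> L" and v40: "v4 \<noteq> 0"
  shows "\<exists>g a1 a2 a3 a4. g > 0 \<and> g \<in> L \<and> v1 = of_int a1 * g \<and> v2 = of_int a2 * g \<and> v3 = of_int a3 * g \<and> v4 = of_int a4 * g"
proof -
  obtain n1 d1 where 1: "d1 > 0" "v1 = of_int n1 / of_int d1" using rat_repr by blast
  obtain n2 d2 where 2: "d2 > 0" "v2 = of_int n2 / of_int d2" using rat_repr by blast
  obtain n3 d3 where 3: "d3 > 0" "v3 = of_int n3 / of_int d3" using rat_repr by blast
  obtain n4 d4 where 4: "d4 > 0" "v4 = of_int n4 / of_int d4" using rat_repr by blast
  define N where "N = d1 * d2 * d3 * d4"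
  have N0: "N > 0" unfolding N_def using 1 2 3 4 by simp
  define k1 where "k1 = n1 * d2 * d3 * d4"
  define k2 where "k2 = n2 * d1 * d3 * d4"
  define k3 where "k3 = n3 * d1 * d2 * d4"
  define k4 where "k4 = n4 * d1 * d2 * d3"
  have e1: "v1 = of_int k1 / of_int N" unfolding k1_def N_def 1(2) using 1 2 3 4 by (simp add: field_simps)
  have e2: "v2 = of_int k2 / of_int N" unfolding k2_def N_def 2(2) using 1 2 3 4 by (simp add: field_simps)
  have e3: "v3 = of_int k3 / of_int N" unfolding k3_def N_def 3(2) using 1 2 3 4 by (simp add: field_simps)
  have e4: "v4 = of_int k4 / of_int N" unfolding k4_def N_def 4(2) using 1 2 3 4 by (simp add: field_simps)
  define G where "G = gcd k1 (gcd k2 (gcd k3 k4))"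
  have k40: "k4 \<noteq> 0" using e4 v40 by auto
  have G0: "G > 0" unfolding G_def using k40 by (simp add: le_less)
  define g where "g = (of_int G :: rat) / of_int N"
  have g0: "g > 0" unfolding g_def using G0 N0 by simp
  obtain c1 c2 c3 c4 where c: "c1 * k1 + c2 * k2 + c3 * k3 + c4 * k4 = G" using gcd_comb unfolding G_def by blast
  have "g = of_int c1 * v1 + of_int c2 * v2 + of_int c3 * v3 + of_int c4 * v4"
  proof -
    have "(of_int G :: rat) = of_int c1 * of_int k1 + of_int c2 * of_int k2 + of_int c3 * of_int k3 + of_int c4 * of_int k4"
      unfolding c[symmetric] by simp
    then show ?thesis unfolding g_def e1 e2 e3 e4 by (simp add: add_divide_distrib)
  qed
  then have gL: "g \<in> L" using v L by (simp add: subgrp_add subgrp_int_mult)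
  have dv: "G dvd k1" "G dvd k2" "G dvd k3" "G dvd k4" unfolding G_def
    by (meson dvd_trans gcd_dvd1 gcd_dvd2)+
  have rep: "v = of_int (k div G) * g" if "v = of_int k / of_int N" "G dvd k" for v k
  proof -
    from that(2) obtain t where "k = G * t" by blast
    then show ?thesis using that(1) G0 N0 unfolding g_def by simp
  qed
  show ?thesis using rep[OF e1 dv(1)] rep[OF e2 dv(2)] rep[OF e3 dv(3)] rep[OF e4 dv(4)] g0 gL by blast
qed

lemma eventual:
  fixes T L :: "rat set" and g x :: rat and a :: int
  assumes T0: "0 \<in> T" and Tadd: "\<forall>a\<in>T. \<forall>b\<in>T. a + b \<in> T"
    and Tsimp: "\<forall>u\<in>T. u \<noteq> 0 \<longrightarrow> (\<forall>h\<in>L. \<exists>N::nat. h + of_nat N * u \<in> T \<and> of_nat N * u - h \<in> T)"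
    and L: "subgrp L" and gL: "g \<in> L" and xT: "x \<in> T" and x0: "x \<noteq> 0" and xa: "x = of_int a * g" and a0: "a > 0"
  shows "\<exists>M::int. M \<ge> 0 \<and> (\<forall>kk \<ge> M. of_int kk * g \<in> T)"
proof -
  have "\<forall>c. \<exists>N::nat. c < nat a \<longrightarrow> of_nat c * g + of_nat N * x \<in> T"
  proof
    fix c :: nat
    have "of_nat c * g \<in> L" using subgrp_nat_mult[OF L gL] .
    then show "\<exists>N::nat. c < nat a \<longrightarrow> of_nat c * g + of_nat N * x \<in> T" using Tsimp xT x0 by blast
  qed
  then obtain Nf where Nf: "\<And>c. c < nat a \<Longrightarrow> of_nat c * g + of_nat (Nf c) * x \<in> T" by metis
  define B where "B = (\<Sum>c<nat a. Nf c)"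
  have NB: "Nf c \<le> B" if "c < nat a" for c unfolding B_def using that by (intro member_le_sum) auto
  define M where "M = int B * a"
  have "\<forall>kk \<ge> M. of_int kk * g \<in> T"
  proof (intro allI impI)
    fix kk assume kk: "kk \<ge> M"
    define c where "c = kk mod a"
    define e where "e = kk div a"
    have c0: "0 \<le> c" "c < a" unfolding c_def using a0 by auto
    have "M div a = int B" unfolding M_def using a0 by simp
    then have eB: "e \<ge> int B" unfolding e_def using zdiv_mono1[OF kk, of a] a0 by simp
    have kke: "kk = e * a + c" unfolding e_def c_def by simp
    have cl: "nat c < nat a" using c0 by simp
    have "of_int kk * g = (of_nat (nat c) * g + of_nat (Nf (nat c)) * x) + of_nat (nat e - Nf (nat c)) * x"
    proof -
      have "Nf (nat c) \<le> nat e" using NB[OF cl] eB by linarith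
      then have "of_nat (nat e - Nf (nat c)) = (of_int e - of_nat (Nf (nat c)) :: rat)" using eB by (simp add: of_nat_diff)
      moreover have "(of_nat (nat c) :: rat) = of_int c" using c0 by simp
      ultimately show ?thesis unfolding xa kke by (simp add: algebra_simps)
    qed
    moreover have "of_nat (nat e - Nf (nat c)) * x \<in> T" using cone_nat_mult[OF T0 Tadd xT] .
    ultimately show "of_int kk * g \<in> T" using Nf[OF cl] Tadd by simp
  qed
  moreover have "M \<ge> 0" unfolding M_def using a0 by simp
  ultimately show ?thesis by blast
qed

lemma e_not_inq:
  assumes q: "prime q" and nq: "n q = 0" and D0: "D > 0"
  shows "\<not> inq (lev (Z_gi n) D) q (1 / of_nat D)"
proof
  assume "inq (lev (Z_gi n) D) q (1 / of_nat D)"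
  then obtain a where a: "a \<in> Z_gi n" "1 / of_nat D = of_nat q * (a / of_nat D)" unfolding inq_def lev_def by blast
  have "a = 1 / of_nat q" using a(2) D0 q by (simp add: field_simps prime_gt_0_nat)
  then show False using inv_prime_notin[of q n, OF q nq] a(1) by simp
qed

lemma e_in_lev: "D > 0 \<Longrightarrow> 1 / of_nat D \<in> lev (Z_gi n) D"
  unfolding lev_def using one_in_Z_gi by blast

lemma lin_min_bound:
  fixes r d v :: rat and j Q :: nat
  assumes "j \<le> Q" "v < r" "v < r + of_nat Q * d"
  shows "v < r + of_nat j * d"
proof (cases "d \<ge> 0")
  case True
  then have "0 \<le> of_nat j * d" by simp
  then show ?thesis using assms by linarith
next
  case False
  then have "of_nat Q * d \<le> of_nat j * d" using assms(1) by (intro mult_right_mono_neg) auto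
  then show ?thesis using assms by linarith
qed

lemma riesz_step:
  assumes inv: "invs n m S D T" and cop: "gi_coprime n m" and minf: "\<not> gi_finite m"
    and xT: "x \<in> T" and y1T: "y1 \<in> T" and y2T: "y2 \<in> T" and zT: "y1 + y2 - x \<in> T"
    and x0: "x \<noteq> 0" and y10: "y1 \<noteq> 0" and y20: "y2 \<noteq> 0" and z0: "y1 + y2 - x \<noteq> 0"
  shows "\<exists>D' T'. invs n m S D' T' \<and> T \<subseteq> T' \<and> D dvd D'
     \<and> (\<exists>x1\<in>T'. x - x1 \<in> T' \<and> y1 - x1 \<in> T' \<and> y2 - (x - x1) \<in> T')"
proof -
  define L where "L = lev (Z_gi n) D"
  have L: "subgrp L" unfolding L_def using subgrp_lev[OF subgrp_Z_gi] .
  have D0: "D > 0" and dD: "gi_dvd (gi_of_nat D) m" and TL: "T \<subseteq> L" and T0: "0 \<in> T"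
    and Tadd: "\<forall>a\<in>T. \<forall>b\<in>T. a + b \<in> T" and Tnn: "\<forall>t\<in>T. 0 \<le> t"
    and Tsimp: "\<forall>u\<in>T. u \<noteq> 0 \<longrightarrow> (\<forall>h\<in>L. \<exists>N::nat. h + of_nat N * u \<in> T \<and> of_nat N * u - h \<in> T)"
    using inv unfolding invs_def L_def by blast+
  define e where "e = 1 / (of_nat D :: rat)"
  have eL: "e \<in> L" unfolding e_def L_def using e_in_lev[OF D0] .
  have e0: "e \<noteq> 0" unfolding e_def using D0 by simp
  have xL: "x \<in> L" "y1 \<in> L" "y2 \<in> L" using xT y1T y2T TL by auto
  obtain g a b1 b2 ce where g: "g > 0" "g \<in> L" "x = of_int a * g" "y1 = of_int b1 * g" "y2 = of_int b2 * g" "e = of_int ce * g"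
    using cyclic_gen[OF L xL eL e0] by blast
  have xpos: "x > 0" using xT Tnn x0 by force
  have y1pos: "y1 > 0" using y1T Tnn y10 by force
  have y2pos: "y2 > 0" using y2T Tnn y20 by force
  have zpos: "y1 + y2 - x > 0" using zT Tnn z0 by force
  have a0: "a > 0" using xpos g(1,3) by (simp add: zero_less_mult_iff)
  obtain M where M: "M \<ge> 0" "\<And>kk. kk \<ge> M \<Longrightarrow> of_int kk * g \<in> T"
    using eventual[OF T0 Tadd Tsimp L g(2) xT x0 g(3) a0] by blast
  define \<mu> where "\<mu> = min (min x y1) (min y2 (y1 + y2 - x))"
  have mu0: "\<mu> > 0" unfolding \<mu>_def using xpos y1pos y2pos zpos by simp
  obtain Qb :: nat where Qb: "2 * of_int M * g + 4 * g < of_nat Qb * \<mu>" using ex_less_of_nat_mult[OF mu0] by blast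
  obtain q k where qk: "prime q" "m q \<noteq> 0" "q ^ k \<ge> Qb" "gi_dvd (gi_of_nat (D * q ^ k)) m"
    using big_prime_power[OF minf D0 dD] by blast
  define Q where "Q = q ^ k"
  have nq: "n q = 0" using cop qk(1,2) unfolding gi_coprime_def by blast
  have Q0: "Q > 0" unfolding Q_def using qk(1) by (simp add: prime_gt_0_nat)
  have QQb: "of_nat Qb * \<mu> \<le> of_nat Q * \<mu>" using qk(3) mu0 unfolding Q_def by (intro mult_right_mono) auto
  define lo where "lo = of_int M * g + of_nat Q * max 0 (x - y2)"
  define hi where "hi = min (of_nat Q * x) (of_nat Q * y1) - of_int M * g"
  have gap: "hi - lo > 4 * g"
  proof -
    have m1: "of_nat Q * \<mu> \<le> of_nat Q * x" "of_nat Q * \<mu> \<le> of_nat Q * y1"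
      "of_nat Q * \<mu> \<le> of_nat Q * y2" "of_nat Q * \<mu> \<le> of_nat Q * (y1 + y2 - x)"
      unfolding \<mu>_def by (intro mult_left_mono; simp)+
    have d1: "of_nat Q * (y1 + y2 - x) = of_nat Q * y1 + of_nat Q * y2 - of_nat Q * x" by (simp add: algebra_simps)
    have d2: "of_nat Q * (x - y2) = of_nat Q * x - of_nat Q * y2" by (simp add: algebra_simps)
    have "min (of_nat Q * x) (of_nat Q * y1) - of_nat Q * max 0 (x - y2) \<ge> of_nat Q * \<mu>"
    proof (cases "x - y2 \<ge> 0")
      case True
      then have "max 0 (x - y2) = x - y2" by simp
      then show ?thesis using m1 d1 d2 by (simp add: min_def)
    next
      case False
      then have "max 0 (x - y2) = 0" by simp
      then show ?thesis using m1 by (simp add: min_def)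
    qed
    then show ?thesis unfolding hi_def lo_def using Qb QQb by linarith
  qed
  define k1 where "k1 = \<lfloor>lo / g\<rfloor> + 1"
  have k1a: "lo < of_int k1 * g"
  proof -
    have "lo / g < of_int k1" unfolding k1_def by linarith
    then show ?thesis using g(1) by (simp add: pos_divide_less_eq)
  qed
  have k1b: "of_int k1 * g \<le> lo + g"
  proof -
    have "of_int k1 \<le> lo / g + 1" unfolding k1_def by linarith
    then have "of_int k1 * g \<le> (lo / g + 1) * g" using g(1) by (intro mult_right_mono) auto
    then show ?thesis using g(1) by (simp add: algebra_simps)
  qed
  define k0 where "k0 = (if int q dvd k1 then k1 + 1 else k1)"
  have nk0: "\<not> int q dvd k0"
  proof
    assume h: "int q dvd k0"
    show False
    proof (cases "int q dvd k1")
      case True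
      then have "int q dvd k1 + 1" using h unfolding k0_def by simp
      then have "int q dvd 1" using True by (simp add: dvd_add_right_iff)
      then show False using qk(1) by (simp add: prime_nat_iff_prime)
    next
      case False then show False using h unfolding k0_def by simp
    qed
  qed
  define r where "r = of_int k0 * g"
  have rlo: "lo < r" and rhi: "r < hi"
  proof -
    have "of_int k1 * g \<le> r" "r \<le> of_int k1 * g + g" unfolding r_def k0_def using g(1) by (auto simp: algebra_simps)
    then show "lo < r" "r < hi" using k1a k1b gap g(1) by linarith+
  qed
  have rL: "r \<in> L" unfolding r_def using subgrp_int_mult[OF L g(2)] .
  have nr: "\<not> inq L q r"
  proof
    assume "inq L q r"
    then obtain t where t: "t \<in> L" "r = of_nat q * t" unfolding inq_def by blast
    have "coprime (int q) k0" using nk0 qk(1) by (simp add: prime_imp_coprime_int prime_nat_iff_prime)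
    then have "gcd k0 (int q) = 1" by (simp add: coprime_iff_gcd_eq_1 gcd.commute)
    then obtain u v where uv: "u * k0 + v * int q = 1" using bezout_int[of k0 "int q"] by metis
    have "g = of_int u * r + of_int v * of_nat q * g"
    proof -
      have "g = of_int (u * k0 + v * int q) * g" using uv by simp
      then show ?thesis unfolding r_def by (simp add: algebra_simps)
    qed
    define X where "X = of_int u * t + of_int v * g"
    have gq: "g = of_nat q * X" unfolding X_def using \<open>g = _\<close> t(2) by (simp add: algebra_simps)
    have "e = of_int ce * (of_nat q * X)" using g(6) gq by metis
    then have "e = of_nat q * (of_int ce * (of_int u * t + of_int v * g))" unfolding X_def by (simp add: algebra_simps)
    moreover have "of_int ce * (of_int u * t + of_int v * g) \<in> L"
      using t(1) g(2) L by (intro subgrp_int_mult subgrp_add) auto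
    ultimately have "inq L q e" unfolding inq_def by blast
    then show False using e_not_inq[of q n D, OF qk(1) nq D0] unfolding L_def e_def by blast
  qed
  have Mg: "of_int M * g \<le> lo" unfolding lo_def by simp
  have AP1: "r + of_nat j * (y2 - x) \<in> T" if j: "j \<le> Q" for j
  proof -
    have "of_nat Q * (x - y2) \<le> of_nat Q * max 0 (x - y2)" by (intro mult_left_mono) auto
    then have "of_int M * g < r + of_nat Q * (y2 - x)" using rlo unfolding lo_def by (simp add: algebra_simps)
    then have lt: "of_int M * g < r + of_nat j * (y2 - x)" using lin_min_bound[OF j, of "of_int M * g" r "y2 - x"] rlo Mg by linarith
    have eq: "r + of_nat j * (y2 - x) = of_int (k0 + int j * (b2 - a)) * g"
      unfolding r_def g(3) g(5) by (simp add: algebra_simps)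
    have "M \<le> k0 + int j * (b2 - a)"
    proof -
      have "of_int M * g < of_int (k0 + int j * (b2 - a)) * g" using lt eq by simp
      then have "of_int M < (of_int (k0 + int j * (b2 - a)) :: rat)" using g(1) mult_less_cancel_right by fastforce
      then have "M < k0 + int j * (b2 - a)" using of_int_less_iff by blast
      then show ?thesis by simp
    qed
    then show ?thesis unfolding eq by (rule M(2))
  qed
  have AP2: "of_nat Q * x - r + of_nat j * (y1 - x) \<in> T" if j: "j \<le> Q" for j
  proof -
    have h1: "of_int M * g < of_nat Q * x - r" using rhi unfolding hi_def by (simp add: min_def split: if_splits)
    have h2: "of_int M * g < of_nat Q * x - r + of_nat Q * (y1 - x)" using rhi unfolding hi_def by (simp add: min_def algebra_simps split: if_splits)
    have lt: "of_int M * g < of_nat Q * x - r + of_nat j * (y1 - x)" using lin_min_bound[OF j h1 h2] .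
    have eq: "of_nat Q * x - r + of_nat j * (y1 - x) = of_int (int Q * a - k0 + int j * (b1 - a)) * g"
      unfolding r_def g(3) g(4) by (simp add: algebra_simps)
    have "M \<le> int Q * a - k0 + int j * (b1 - a)"
    proof -
      have "of_int M * g < of_int (int Q * a - k0 + int j * (b1 - a)) * g" using lt eq by simp
      then have "of_int M < (of_int (int Q * a - k0 + int j * (b1 - a)) :: rat)" using g(1) mult_less_cancel_right by fastforce
      then have "M < int Q * a - k0 + int j * (b1 - a)" using of_int_less_iff by blast
      then show ?thesis by simp
    qed
    then show ?thesis unfolding eq by (rule M(2))
  qed
  define w1 where "w1 = r / of_nat Q"
  have res: "invs n m S (D * Q) (adj T w1 (x - w1) (y1 - w1) (y2 - x + w1))
    \<and> T \<subseteq> adj T w1 (x - w1) (y1 - w1) (y2 - x + w1)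
    \<and> w1 \<in> adj T w1 (x - w1) (y1 - w1) (y2 - x + w1)
    \<and> x - w1 \<in> adj T w1 (x - w1) (y1 - w1) (y2 - x + w1)
    \<and> y1 - w1 \<in> adj T w1 (x - w1) (y1 - w1) (y2 - x + w1)
    \<and> y2 - x + w1 \<in> adj T w1 (x - w1) (y1 - w1) (y2 - x + w1)"
    using ADJ[OF inv qk(1) Q_def _ xT y1T y2T zT _ _ AP1 AP2 w1_def] qk(4) rL nr unfolding Q_def L_def by blast
  have yy: "y2 - (x - w1) = y2 - x + w1" by simp
  have "\<exists>x1\<in>adj T w1 (x - w1) (y1 - w1) (y2 - x + w1). x - x1 \<in> adj T w1 (x - w1) (y1 - w1) (y2 - x + w1)
      \<and> y1 - x1 \<in> adj T w1 (x - w1) (y1 - w1) (y2 - x + w1) \<and> y2 - (x - x1) \<in> adj T w1 (x - w1) (y1 - w1) (y2 - x + w1)"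
    using res unfolding yy by (intro bexI[of _ w1]) (simp_all add: yy)
  moreover have "D dvd D * Q" by simp
  ultimately show ?thesis using res by blast
qed

lemma cover_step:
  assumes inv: "invs n m S D T" and cop: "gi_coprime n m" and p: "prime p" and mp: "m p \<noteq> 0"
    and dv: "gi_dvd (gi_of_nat (D * p)) m" and uT: "u \<in> T" and u0: "u \<noteq> 0"
  shows "\<exists>T'. invs n m S (D * p) T' \<and> T \<subseteq> T'"
proof -
  define L where "L = lev (Z_gi n) D"
  have L: "subgrp L" unfolding L_def using subgrp_lev[OF subgrp_Z_gi] .
  have D0: "D > 0" and TL: "T \<subseteq> L" and T0: "0 \<in> T"
    and Tadd: "\<forall>a\<in>T. \<forall>b\<in>T. a + b \<in> T"
    and Tsimp: "\<forall>u\<in>T. u \<noteq> 0 \<longrightarrow> (\<forall>h\<in>L. \<exists>N::nat. h + of_nat N * u \<in> T \<and> of_nat N * u - h \<in> T)"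
    using inv unfolding invs_def L_def by blast+
  have np: "n p = 0" using cop p mp unfolding gi_coprime_def by blast
  define e where "e = 1 / (of_nat D :: rat)"
  have eL: "e \<in> L" unfolding e_def L_def using e_in_lev[OF D0] .
  obtain N0 where N0: "e + of_nat N0 * u \<in> T" using Tsimp uT u0 eL by blast
  define r where "r = (e + of_nat N0 * u) + of_nat (p - 1) * (of_nat N0 * u)"
  have rT: "r \<in> T" unfolding r_def using N0 cone_nat_mult[OF T0 Tadd] cone_nat_mult[OF T0 Tadd uT] Tadd by blast
  have re: "r = e + of_nat p * (of_nat N0 * u)"
  proof -
    have "of_nat (p - 1) = (of_nat p - 1 :: rat)" using prime_ge_1_nat[OF p] by (simp add: of_nat_diff)
    then show ?thesis unfolding r_def by (simp add: algebra_simps)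
  qed
  have rL: "r \<in> L" using rT TL by blast
  have nr: "\<not> inq L p r"
  proof
    assume "inq L p r"
    then obtain t where t: "t \<in> L" "r = of_nat p * t" unfolding inq_def by blast
    have "e = of_nat p * (t - of_nat N0 * u)" using t(2) re by (simp add: algebra_simps)
    moreover have "t - of_nat N0 * u \<in> L" using t(1) uT TL L by (intro subgrp_diff subgrp_nat_mult) auto
    ultimately have "inq L p e" unfolding inq_def by blast
    then show False using e_not_inq[of p n D, OF p np D0] unfolding L_def e_def by blast
  qed
  obtain N where N: "of_nat N * u - r \<in> T" using Tsimp uT u0 rL by blast
  define s where "s = of_nat N * u"
  have sT: "s \<in> T" unfolding s_def using cone_nat_mult[OF T0 Tadd uT] .
  have psr: "of_nat p * s - r \<in> T"
  proof -
    have "of_nat p * s - r = (s - r) + of_nat (p - 1) * s"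
    proof -
      have "of_nat (p - 1) = (of_nat p - 1 :: rat)" using prime_ge_1_nat[OF p] by (simp add: of_nat_diff)
      then show ?thesis by (simp add: algebra_simps)
    qed
    moreover have "(s - r) + of_nat (p - 1) * s \<in> T" using N cone_nat_mult[OF T0 Tadd sT] Tadd unfolding s_def by blast
    ultimately show ?thesis by metis
  qed
  have AP1: "r + of_nat j * (s - s) \<in> T" if "j \<le> p ^ 1" for j using rT by simp
  have AP2: "of_nat (p ^ 1) * s - r + of_nat j * (s - s) \<in> T" if "j \<le> p ^ 1" for j using psr by simp
  have zT: "s + s - s \<in> T" using sT by simp
  have dv': "gi_dvd (gi_of_nat (D * p ^ 1)) m" using dv by simp
  define w1 where "w1 = r / of_nat (p ^ 1)"
  have "invs n m S (D * p ^ 1) (adj T w1 (s - w1) (s - w1) (s - s + w1))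
    \<and> T \<subseteq> adj T w1 (s - w1) (s - w1) (s - s + w1)"
    using ADJ[OF inv p refl dv' sT sT sT zT _ _ AP1 AP2 w1_def] rL nr unfolding L_def by blast
  then show ?thesis by auto
qed

definition inst :: "nat \<Rightarrow> rat \<times> rat \<times> rat" where "inst i = from_nat (fst (prod_decode i))"
definition prm :: "nat \<Rightarrow> nat" where "prm i = snd (prod_decode i)"

definition good_step :: "gen_int \<Rightarrow> gen_int \<Rightarrow> rat set \<Rightarrow> nat \<Rightarrow> nat \<times> rat set \<Rightarrow> nat \<times> rat set \<Rightarrow> bool" where
  "good_step n m S i st st' \<longleftrightarrow> invs n m S (fst st') (snd st') \<and> snd st \<subseteq> snd st' \<and> fst st dvd fst st'
   \<and> (\<forall>x y1 y2. inst i = (x, y1, y2) \<longrightarrow> x \<in> snd st \<longrightarrow> y1 \<in> snd st \<longrightarrow> y2 \<in> snd st \<longrightarrow> y1 + y2 - x \<in> snd st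
        \<longrightarrow> x \<noteq> 0 \<longrightarrow> y1 \<noteq> 0 \<longrightarrow> y2 \<noteq> 0 \<longrightarrow> y1 + y2 - x \<noteq> 0
        \<longrightarrow> (\<exists>x1\<in>snd st'. x - x1 \<in> snd st' \<and> y1 - x1 \<in> snd st' \<and> y2 - (x - x1) \<in> snd st'))
   \<and> (prime (prm i) \<and> gi_dvd (gi_of_nat (fst st * prm i)) m \<longrightarrow> fst st * prm i dvd fst st')"

lemma good_step_ex:
  assumes inv: "invs n m S D T" and cop: "gi_coprime n m" and minf: "\<not> gi_finite m" and Snt: "\<exists>u\<in>S. u \<noteq> 0"
  shows "\<exists>st'. good_step n m S i (D, T) st'"
proof -
  have ST: "S \<subseteq> T" using inv unfolding invs_def by blast
  obtain u where u: "u \<in> T" "u \<noteq> 0" using Snt ST by blast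
  obtain D1 T1 where s1: "invs n m S D1 T1" "T \<subseteq> T1" "D dvd D1"
    "prime (prm i) \<and> gi_dvd (gi_of_nat (D * prm i)) m \<longrightarrow> D * prm i dvd D1"
  proof (cases "prime (prm i) \<and> gi_dvd (gi_of_nat (D * prm i)) m")
    case True
    have mp: "m (prm i) \<noteq> 0"
    proof
      assume h: "m (prm i) = 0"
      have D0: "D > 0" using inv unfolding invs_def by blast
      have "multiplicity (prm i) (D * prm i) = multiplicity (prm i) D + 1"
        using True D0 by (subst prime_elem_multiplicity_mult_distrib) (auto simp: prime_gt_0_nat)
      then show False using True h unfolding gi_dvd_iff by (metis add_eq_0_iff_both_eq_0 enat_0_iff(1) le_zero_eq one_neq_zero)
    qed
    obtain T1 where "invs n m S (D * prm i) T1" "T \<subseteq> T1"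
      using cover_step[OF inv cop _ mp _ u] True by blast
    then show ?thesis using that[of "D * prm i" T1] by simp
  next
    case False
    show ?thesis by (rule that[of D T]) (use inv False in auto)
  qed
  obtain D' T' where s2: "invs n m S D' T'" "T1 \<subseteq> T'" "D1 dvd D'"
    "\<forall>x y1 y2. inst i = (x, y1, y2) \<longrightarrow> x \<in> T \<longrightarrow> y1 \<in> T \<longrightarrow> y2 \<in> T \<longrightarrow> y1 + y2 - x \<in> T
        \<longrightarrow> x \<noteq> 0 \<longrightarrow> y1 \<noteq> 0 \<longrightarrow> y2 \<noteq> 0 \<longrightarrow> y1 + y2 - x \<noteq> 0
        \<longrightarrow> (\<exists>x1\<in>T'. x - x1 \<in> T' \<and> y1 - x1 \<in> T' \<and> y2 - (x - x1) \<in> T')"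
  proof -
    obtain x y1 y2 where xy: "inst i = (x, y1, y2)" by (cases "inst i") auto
    show ?thesis
    proof (cases "x \<in> T \<and> y1 \<in> T \<and> y2 \<in> T \<and> y1 + y2 - x \<in> T \<and> x \<noteq> 0 \<and> y1 \<noteq> 0 \<and> y2 \<noteq> 0 \<and> y1 + y2 - x \<noteq> 0")
      case True
      then obtain D' T' where "invs n m S D' T'" "T1 \<subseteq> T'" "D1 dvd D'"
        "\<exists>x1\<in>T'. x - x1 \<in> T' \<and> y1 - x1 \<in> T' \<and> y2 - (x - x1) \<in> T'"
        using riesz_step[OF s1(1) cop minf, of x y1 y2] s1(2) by blast
      then show ?thesis using that[of D' T'] xy by simp
    next
      case False
      then show ?thesis using that[of D1 T1] s1 xy by auto
    qed
  qed
  have "good_step n m S i (D, T) (D', T')"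
    unfolding good_step_def using s1 s2 by (auto intro: dvd_trans)
  then show ?thesis by blast
qed

definition stseq :: "gen_int \<Rightarrow> gen_int \<Rightarrow> rat set \<Rightarrow> nat \<Rightarrow> nat \<times> rat set" where
  "stseq n m S i = rec_nat (1, S) (\<lambda>i st. SOME st'. good_step n m S i st st') i"

lemma stseq_0: "stseq n m S 0 = (1, S)" unfolding stseq_def by simp
lemma stseq_Suc: "stseq n m S (Suc i) = (SOME st'. good_step n m S i (stseq n m S i) st')"
  unfolding stseq_def by simp

lemma invs_init:
  assumes "S \<subseteq> Z_gi n" "0 \<in> S" "\<forall>a\<in>S. \<forall>b\<in>S. a + b \<in> S" "\<forall>t\<in>S. 0 \<le> t"
    "\<forall>u\<in>S. u \<noteq> 0 \<longrightarrow> (\<forall>h\<in>Z_gi n. \<exists>N::nat. h + of_nat N * u \<in> S \<and> of_nat N * u - h \<in> S)"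
  shows "invs n m S 1 S"
proof -
  have "lev (Z_gi n) 1 = Z_gi n" unfolding lev_def by simp
  then show ?thesis unfolding invs_def using assms gi_dvd_one by auto
qed

lemma stseq_good:
  assumes init: "invs n m S 1 S" and cop: "gi_coprime n m" and minf: "\<not> gi_finite m" and Snt: "\<exists>u\<in>S. u \<noteq> 0"
  shows "invs n m S (fst (stseq n m S i)) (snd (stseq n m S i)) \<and> good_step n m S i (stseq n m S i) (stseq n m S (Suc i))"
proof (induction i)
  case 0
  have "\<exists>st'. good_step n m S 0 (1, S) st'" using good_step_ex[OF init cop minf Snt] .
  then have "good_step n m S 0 (stseq n m S 0) (stseq n m S (Suc 0))"
    unfolding stseq_Suc stseq_0 by (rule someI_ex)
  then show ?case using init unfolding stseq_0 by simp
next
  case (Suc i)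
  then have inv: "invs n m S (fst (stseq n m S (Suc i))) (snd (stseq n m S (Suc i)))"
    unfolding good_step_def by blast
  have "\<exists>st'. good_step n m S (Suc i) (fst (stseq n m S (Suc i)), snd (stseq n m S (Suc i))) st'"
    using good_step_ex[OF inv cop minf Snt] .
  then have "good_step n m S (Suc i) (stseq n m S (Suc i)) (stseq n m S (Suc (Suc i)))"
    unfolding stseq_Suc[of n m S "Suc i"] by (simp add: someI_ex)
  then show ?case using inv by simp
qed

locale lim =
  fixes n m :: gen_int and S :: "rat set"
  assumes init: "invs n m S 1 S" and cop: "gi_coprime n m" and minf: "\<not> gi_finite m"
    and Snt: "\<exists>u\<in>S. u \<noteq> 0"
begin

abbreviation Dq where "Dq i \<equiv> fst (stseq n m S i)"
abbreviation Tq where "Tq i \<equiv> snd (stseq n m S i)"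

lemma inv_i: "invs n m S (Dq i) (Tq i)" using stseq_good[OF init cop minf Snt] by blast
lemma good_i: "good_step n m S i (stseq n m S i) (stseq n m S (Suc i))" using stseq_good[OF init cop minf Snt] by blast

lemma mono_i: "i \<le> j \<Longrightarrow> Tq i \<subseteq> Tq j \<and> Dq i dvd Dq j"
proof (induction j rule: dec_induct)
  case base then show ?case by simp
next
  case (step j)
  then show ?case using good_i[of j] unfolding good_step_def by (auto intro: dvd_trans)
qed

lemma prm_enc: "prm (prod_encode (i, p)) = p" unfolding prm_def by simp
lemma inst_enc: "inst (prod_encode (to_nat a, i)) = a" unfolding inst_def by simp

lemma prime_power_cover: "prime p \<Longrightarrow> enat e \<le> m p \<Longrightarrow> \<exists>i. p ^ e dvd Dq i"
proof (induction e)
  case 0 then show ?case by simp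
next
  case (Suc e)
  have "enat e \<le> enat (Suc e)" by simp
  then have "enat e \<le> m p" using Suc.prems(2) by (rule order_trans)
  then obtain i where i: "p ^ e dvd Dq i" using Suc.IH Suc.prems(1) by blast
  define j where "j = prod_encode (i, p)"
  have ij: "i \<le> j" unfolding j_def by (rule le_prod_encode_1)
  have pj: "prm j = p" unfolding j_def by (rule prm_enc)
  have ej: "p ^ e dvd Dq j" using i mono_i[OF ij] by (meson dvd_trans)
  have invj: "invs n m S (Dq j) (Tq j)" by (rule inv_i)
  have Dj0: "Dq j > 0" and Djm: "gi_dvd (gi_of_nat (Dq j)) m" using invj unfolding invs_def by blast+
  show ?case
  proof (cases "gi_dvd (gi_of_nat (Dq j * p)) m")
    case True
    then have "Dq j * p dvd Dq (Suc j)" using good_i[of j] Suc.prems(1) pj unfolding good_step_def by auto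
    moreover have "p ^ Suc e dvd Dq j * p" using ej by (simp add: mult.commute mult_dvd_mono)
    ultimately show ?thesis by (meson dvd_trans)
  next
    case False
    then obtain p' where p': "prime p'" "\<not> enat (multiplicity p' (Dq j * p)) \<le> m p'" unfolding gi_dvd_iff by blast
    have eq: "multiplicity p' (Dq j * p) = multiplicity p' (Dq j) + multiplicity p' p"
      using p'(1) Dj0 Suc.prems(1) by (intro prime_elem_multiplicity_mult_distrib) (auto simp: prime_gt_0_nat)
    have pp: "p' = p"
    proof (rule ccontr)
      assume "p' \<noteq> p"
      then have "multiplicity p' p = 0" using multiplicity_distinct_prime_power[OF p'(1) Suc.prems(1), of 1] by simp
      then show False using eq p' Djm unfolding gi_dvd_iff by simp
    qed
    have "\<not> enat (multiplicity p (Dq j) + 1) \<le> m p" using p'(2) eq pp Suc.prems(1) by simp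
    then have "m p < enat (multiplicity p (Dq j) + 1)" by (simp add: not_le)
    then have "enat (Suc e) < enat (multiplicity p (Dq j) + 1)" by (rule le_less_trans[OF Suc.prems(2)])
    then have "Suc e \<le> multiplicity p (Dq j)" by simp
    then show ?thesis using multiplicity_dvd' by blast
  qed
qed

lemma cover: assumes b0: "b > 0" and bm: "gi_dvd (gi_of_nat b) m" shows "\<exists>i. b dvd Dq i"
proof -
  define F where "F = prime_factors b"
  have fin: "finite F" unfolding F_def by simp
  have "\<forall>p. \<exists>i. p \<in> F \<longrightarrow> p ^ multiplicity p b dvd Dq i"
  proof
    fix p
    show "\<exists>i. p \<in> F \<longrightarrow> p ^ multiplicity p b dvd Dq i"
    proof (cases "p \<in> F")
      case True
      then have "prime p" unfolding F_def by auto
      then show ?thesis using prime_power_cover bm unfolding gi_dvd_iff by blast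
    qed simp
  qed
  then obtain ip where ip: "\<And>p. p \<in> F \<Longrightarrow> p ^ multiplicity p b dvd Dq (ip p)" by metis
  define I where "I = (\<Sum>p\<in>F. ip p)"
  have "ip p \<le> I" if "p \<in> F" for p unfolding I_def using fin that by (intro member_le_sum) auto
  then have dI: "p ^ multiplicity p b dvd Dq I" if "p \<in> F" for p
    using ip[OF that] mono_i that by (meson dvd_trans)
  have DI0: "Dq I > 0" using inv_i[of I] unfolding invs_def by blast
  have "b dvd Dq I"
  proof (rule multiplicity_le_imp_dvd)
    show "b \<noteq> 0" using b0 by simp
    fix p :: nat assume p: "prime p"
    show "multiplicity p b \<le> multiplicity p (Dq I)"
    proof (cases "p \<in> F")
      case True
      then show ?thesis using dI[OF True] DI0 p by (subst (asm) power_dvd_iff_le_multiplicity) auto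
    next
      case False
      then have "\<not> (prime p \<and> multiplicity p b > 0)" unfolding F_def prime_factors_multiplicity by simp
      then have "multiplicity p b = 0" using p by simp
      then show ?thesis by simp
    qed
  qed
  then show ?thesis by blast
qed

end

lemma split_level:
  assumes cop: "gi_coprime n m" and h: "h \<in> Z_gi (gi_mult n m)"
  shows "\<exists>b2>0. gi_dvd (gi_of_nat b2) m \<and> h \<in> lev (Z_gi n) b2"
proof -
  obtain k b where kb: "b > 0" "gi_dvd (gi_of_nat b) (gi_mult n m)" "h = of_int k / of_nat b"
    using h unfolding Z_gi_def by blast
  define F where "F = {p \<in> prime_factors b. n p = 0}"
  have finF: "finite F" unfolding F_def by simp
  have primeF: "\<And>p. p \<in> F \<Longrightarrow> prime p" unfolding F_def by auto
  define b2 where "b2 = (\<Prod>p\<in>F. p ^ multiplicity p b)"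
  have mb2: "multiplicity p b2 = (if p \<in> F then multiplicity p b else 0)" if "prime p" for p
    unfolding b2_def using multiplicity_prod_prime_powers[OF finF primeF that] by simp
  have b20: "b2 > 0" unfolding b2_def using primeF by (intro prod_pos) (auto simp: prime_gt_0_nat)
  have b2b: "b2 dvd b"
  proof (rule multiplicity_le_imp_dvd)
    show "b2 \<noteq> 0" using b20 by simp
    fix p :: nat assume "prime p" then show "multiplicity p b2 \<le> multiplicity p b" using mb2 by simp
  qed
  define b1 where "b1 = b div b2"
  have bb: "b = b1 * b2" unfolding b1_def using b2b by simp
  have b10: "b1 > 0" using bb kb(1) by (metis nat_0_less_mult_iff)
  have madd: "multiplicity p b = multiplicity p b1 + multiplicity p b2" if "prime p" for p
    unfolding bb using that b10 b20 by (intro prime_elem_multiplicity_mult_distrib) auto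
  have b1n: "gi_dvd (gi_of_nat b1) n"
    unfolding gi_dvd_iff
  proof (intro allI impI)
    fix p :: nat assume p: "prime p"
    show "enat (multiplicity p b1) \<le> n p"
    proof (cases "n p = 0")
      case True
      have "multiplicity p b1 = 0"
      proof (cases "p \<in> prime_factors b")
        case True
        then have "p \<in> F" unfolding F_def using \<open>n p = 0\<close> by simp
        then show ?thesis using madd[OF p] mb2[OF p] by simp
      next
        case False
        then have "\<not> (prime p \<and> multiplicity p b > 0)" unfolding prime_factors_multiplicity by simp
        then have "multiplicity p b = 0" using p by simp
        then show ?thesis using madd[OF p] by simp
      qed
      then show ?thesis by (simp add: enat_0)
    next
      case False
      then have "m p = 0" using cop p unfolding gi_coprime_def by blast
      moreover have "enat (multiplicity p b) \<le> n p + m p" using kb(2) p unfolding gi_dvd_iff gi_mult_def by blast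
      ultimately have "enat (multiplicity p b) \<le> n p" by simp
      moreover have "multiplicity p b1 \<le> multiplicity p b" using madd[OF p] by simp
      ultimately show ?thesis by (meson enat_ord_simps(1) order_trans)
    qed
  qed
  have b2m: "gi_dvd (gi_of_nat b2) m"
    unfolding gi_dvd_iff
  proof (intro allI impI)
    fix p :: nat assume p: "prime p"
    show "enat (multiplicity p b2) \<le> m p"
    proof (cases "p \<in> F")
      case True
      then have "n p = 0" unfolding F_def by simp
      moreover have "enat (multiplicity p b) \<le> n p + m p" using kb(2) p unfolding gi_dvd_iff gi_mult_def by blast
      ultimately show ?thesis using mb2[OF p] True by simp
    next
      case False then show ?thesis using mb2[OF p] by (simp add: enat_0)
    qed
  qed
  have "h = (of_int k / of_nat b1) / of_nat b2" unfolding kb(3) bb by simp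
  moreover have "of_int k / of_nat b1 \<in> Z_gi n" using in_Z_gi[OF b10 b1n] .
  ultimately have "h \<in> lev (Z_gi n) b2" unfolding lev_def by blast
  then show ?thesis using b20 b2m by blast
qed

context lim
begin

lemma in_level: assumes "h \<in> Z_gi (gi_mult n m)" shows "\<exists>i. h \<in> lev (Z_gi n) (Dq i)"
proof -
  obtain b2 where b2: "b2 > 0" "gi_dvd (gi_of_nat b2) m" "h \<in> lev (Z_gi n) b2"
    using split_level[OF cop assms] by blast
  obtain i where "b2 dvd Dq i" using cover[OF b2(1,2)] by blast
  moreover have "Dq i > 0" using inv_i[of i] unfolding invs_def by blast
  ultimately have "lev (Z_gi n) b2 \<subseteq> lev (Z_gi n) (Dq i)" using lev_dvd_mono[OF subgrp_Z_gi b2(1)] by blast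
  then show ?thesis using b2(3) by blast
qed

definition Tinf where "Tinf = (\<Union>i. Tq i)"

lemma Tinf_common: "a \<in> Tinf \<Longrightarrow> b \<in> Tinf \<Longrightarrow> \<exists>i. a \<in> Tq i \<and> b \<in> Tq i"
proof -
  assume "a \<in> Tinf" "b \<in> Tinf"
  then obtain i j where "a \<in> Tq i" "b \<in> Tq j" unfolding Tinf_def by blast
  then have "a \<in> Tq (i + j)" "b \<in> Tq (i + j)" using mono_i[of i "i + j"] mono_i[of j "i + j"] by auto
  then show ?thesis by blast
qed

lemma Tinf_sub: "Tinf \<subseteq> Z_gi (gi_mult n m)"
proof
  fix x assume "x \<in> Tinf"
  then obtain i where "x \<in> Tq i" unfolding Tinf_def by blast
  moreover have "Tq i \<subseteq> lev (Z_gi n) (Dq i)" "Dq i > 0" "gi_dvd (gi_of_nat (Dq i)) m" using inv_i[of i] unfolding invs_def by blast+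
  ultimately show "x \<in> Z_gi (gi_mult n m)" using lev_in_Z[of "Dq i" m n] by blast
qed

lemma Tinf_0: "0 \<in> Tinf" using inv_i[of 0] unfolding invs_def Tinf_def by blast

lemma Tinf_add: "a \<in> Tinf \<Longrightarrow> b \<in> Tinf \<Longrightarrow> a + b \<in> Tinf"
proof -
  assume "a \<in> Tinf" "b \<in> Tinf"
  then obtain i where "a \<in> Tq i" "b \<in> Tq i" using Tinf_common by blast
  then have "a + b \<in> Tq i" using inv_i[of i] unfolding invs_def by blast
  then show ?thesis unfolding Tinf_def by blast
qed

lemma Tinf_nn: "a \<in> Tinf \<Longrightarrow> 0 \<le> a" using inv_i unfolding invs_def Tinf_def by blast

lemma Tinf_K: "Tinf \<inter> Z_gi n = S" using inv_i unfolding invs_def Tinf_def by blast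

lemma Tinf_simple:
  assumes u: "u \<in> Tinf" "u \<noteq> 0" and h: "h \<in> Z_gi (gi_mult n m)"
  shows "\<exists>N::nat. h + of_nat N * u \<in> Tinf \<and> of_nat N * u - h \<in> Tinf"
proof -
  obtain i where i: "u \<in> Tq i" using u unfolding Tinf_def by blast
  obtain j where j: "h \<in> lev (Z_gi n) (Dq j)" using in_level[OF h] by blast
  have ui: "u \<in> Tq (i + j)" using i mono_i[of i "i + j"] by auto
  have "Dq j dvd Dq (i + j)" using mono_i[of j "i + j"] by auto
  moreover have "Dq j > 0" "Dq (i + j) > 0" using inv_i unfolding invs_def by blast+
  ultimately have "h \<in> lev (Z_gi n) (Dq (i + j))" using lev_dvd_mono[OF subgrp_Z_gi, of "Dq j" "Dq (i + j)" n] j by blast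
  then obtain N where "h + of_nat N * u \<in> Tq (i + j)" "of_nat N * u - h \<in> Tq (i + j)"
    using inv_i[of "i + j"] ui u(2) unfolding invs_def by blast
  then show ?thesis unfolding Tinf_def by blast
qed

lemma Tinf_riesz:
  assumes x: "x \<in> Tinf" and y1: "y1 \<in> Tinf" and y2: "y2 \<in> Tinf" and z: "y1 + y2 - x \<in> Tinf"
  shows "\<exists>x1\<in>Tinf. \<exists>x2\<in>Tinf. x = x1 + x2 \<and> y1 - x1 \<in> Tinf \<and> y2 - x2 \<in> Tinf"
proof (cases "x = 0 \<or> y1 = 0 \<or> y2 = 0 \<or> y1 + y2 - x = 0")
  case True
  then show ?thesis
  proof (elim disjE)
    assume "x = 0" then show ?thesis using Tinf_0 y1 y2 by (intro bexI[of _ 0]) auto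
  next
    assume "y1 = 0" then show ?thesis using Tinf_0 x z by (intro bexI[of _ 0] bexI[of _ x]) auto
  next
    assume "y2 = 0" then show ?thesis using Tinf_0 x z by (intro bexI[of _ x] bexI[of _ 0]) auto
  next
    assume h: "y1 + y2 - x = 0"
    then have "x = y1 + y2" by simp
    then show ?thesis using Tinf_0 y1 y2 by (intro bexI[of _ y1] bexI[of _ y2]) auto
  qed
next
  case False
  obtain i1 i2 where "x \<in> Tq i1" "y1 \<in> Tq i1" "y2 \<in> Tq i2" "y1 + y2 - x \<in> Tq i2"
    using Tinf_common[OF x y1] Tinf_common[OF y2 z] by blast
  then have I: "x \<in> Tq (i1 + i2)" "y1 \<in> Tq (i1 + i2)" "y2 \<in> Tq (i1 + i2)" "y1 + y2 - x \<in> Tq (i1 + i2)"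
    using mono_i[of i1 "i1 + i2"] mono_i[of i2 "i1 + i2"] by auto
  define j where "j = prod_encode (to_nat (x, y1, y2), i1 + i2)"
  have ij: "i1 + i2 \<le> j" unfolding j_def by (rule le_prod_encode_2)
  have J: "x \<in> Tq j" "y1 \<in> Tq j" "y2 \<in> Tq j" "y1 + y2 - x \<in> Tq j" using I mono_i[OF ij] by auto
  have "inst j = (x, y1, y2)" unfolding j_def by (rule inst_enc)
  then obtain x1 where x1: "x1 \<in> Tq (Suc j)" "x - x1 \<in> Tq (Suc j)" "y1 - x1 \<in> Tq (Suc j)" "y2 - (x - x1) \<in> Tq (Suc j)"
    using good_i[of j] J False unfolding good_step_def by blast
  show ?thesis
    using x1 unfolding Tinf_def by (intro bexI[of _ x1] bexI[of _ "x - x1"]) auto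
qed

end

lemma core:
  assumes cop: "gi_coprime n m" and minf: "\<not> gi_finite m"
    and S: "S \<subseteq> Z_gi n" "0 \<in> S" "\<forall>a\<in>S. \<forall>b\<in>S. a + b \<in> S" "\<forall>t\<in>S. 0 \<le> t"
      "\<forall>u\<in>S. u \<noteq> 0 \<longrightarrow> (\<forall>h\<in>Z_gi n. \<exists>N::nat. h + of_nat N * u \<in> S \<and> of_nat N * u - h \<in> S)"
    and Snt: "\<exists>u\<in>S. u \<noteq> 0"
  shows "\<exists>T. T \<subseteq> Z_gi (gi_mult n m) \<and> 0 \<in> T \<and> (\<forall>a\<in>T. \<forall>b\<in>T. a + b \<in> T) \<and> (\<forall>t\<in>T. 0 \<le> t)
     \<and> T \<inter> Z_gi n = S
     \<and> (\<forall>u\<in>T. u \<noteq> 0 \<longrightarrow> (\<forall>h\<in>Z_gi (gi_mult n m). \<exists>N::nat. h + of_nat N * u \<in> T \<and> of_nat N * u - h \<in> T))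
     \<and> (\<forall>x\<in>T. \<forall>y1\<in>T. \<forall>y2\<in>T. y1 + y2 - x \<in> T \<longrightarrow> (\<exists>x1\<in>T. \<exists>x2\<in>T. x = x1 + x2 \<and> y1 - x1 \<in> T \<and> y2 - x2 \<in> T))"
proof -
  interpret lim n m S using invs_init[OF S] cop minf Snt by unfold_locales auto
  have 1: "\<forall>a\<in>Tinf. \<forall>b\<in>Tinf. a + b \<in> Tinf" using Tinf_add by blast
  have 2: "\<forall>t\<in>Tinf. 0 \<le> t" using Tinf_nn by blast
  have 3: "\<forall>u\<in>Tinf. u \<noteq> 0 \<longrightarrow> (\<forall>h\<in>Z_gi (gi_mult n m). \<exists>N::nat. h + of_nat N * u \<in> Tinf \<and> of_nat N * u - h \<in> Tinf)"
    using Tinf_simple by blast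
  have 4: "\<forall>x\<in>Tinf. \<forall>y1\<in>Tinf. \<forall>y2\<in>Tinf. y1 + y2 - x \<in> Tinf \<longrightarrow> (\<exists>x1\<in>Tinf. \<exists>x2\<in>Tinf. x = x1 + x2 \<and> y1 - x1 \<in> Tinf \<and> y2 - x2 \<in> Tinf)"
    using Tinf_riesz by blast
  show ?thesis
    by (rule exI[of _ Tinf]) (intro conjI Tinf_sub Tinf_0 Tinf_K 1 2 3 4)
qed

lemma core':
  assumes cop: "gi_coprime n m" and minf: "\<not> gi_finite m"
    and S: "S \<subseteq> Z_gi n" "0 \<in> S" "\<forall>a\<in>S. \<forall>b\<in>S. a + b \<in> S" "\<forall>t\<in>S. 0 \<le> t"
      "\<forall>u\<in>S. u \<noteq> 0 \<longrightarrow> (\<forall>h\<in>Z_gi n. \<exists>N::nat. h + of_nat N * u \<in> S \<and> of_nat N * u - h \<in> S)"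
  shows "\<exists>T. T \<subseteq> Z_gi (gi_mult n m) \<and> 0 \<in> T \<and> (\<forall>a\<in>T. \<forall>b\<in>T. a + b \<in> T) \<and> (\<forall>t\<in>T. 0 \<le> t)
     \<and> T \<inter> Z_gi n = S
     \<and> (\<forall>u\<in>T. u \<noteq> 0 \<longrightarrow> (\<forall>h\<in>Z_gi (gi_mult n m). \<exists>N::nat. h + of_nat N * u \<in> T \<and> of_nat N * u - h \<in> T))
     \<and> (\<forall>x\<in>T. \<forall>y1\<in>T. \<forall>y2\<in>T. y1 + y2 - x \<in> T \<longrightarrow> (\<exists>x1\<in>T. \<exists>x2\<in>T. x = x1 + x2 \<and> y1 - x1 \<in> T \<and> y2 - x2 \<in> T))"
proof (cases "\<exists>u\<in>S. u \<noteq> 0")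
  case True
  then show ?thesis using core[OF cop minf S] by blast
next
  case False
  then have S0: "S = {0}" using S(2) by blast
  have "{0} \<inter> Z_gi n = S" using S0 subgrp_Z_gi[of n] unfolding subgrp_def by blast
  moreover have "{0} \<subseteq> Z_gi (gi_mult n m)" using subgrp_Z_gi[of "gi_mult n m"] unfolding subgrp_def by blast
  ultimately show ?thesis by (intro exI[of _ "{0}"]) auto
qed

lemma additive_zero: "additive_on UNIV f \<Longrightarrow> f 0 = 0"
  unfolding additive_on_def by (metis add.right_neutral add_cancel_right_right iso_tuple_UNIV_I)

lemma additive_neg: "additive_on UNIV f \<Longrightarrow> f (- x) = - (f x :: rat)"
proof -
  assume a: "additive_on UNIV f"
  have "f (x + - x) = f x + f (- x)" using a unfolding additive_on_def by blast
  then show ?thesis using additive_zero[OF a] by simp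
qed

lemma additive_nmul: "additive_on UNIV f \<Longrightarrow> f (nmul N x) = (of_nat N * f x :: rat)"
proof (induction N)
  case 0 then show ?case using additive_zero[OF 0] by simp
next
  case (Suc N)
  have "f (nmul (Suc N) x) = f x + f (nmul N x)" using Suc.prems unfolding additive_on_def by simp
  then show ?case using Suc by (simp add: algebra_simps)
qed

lemma nmul_rat: "nmul N (u::rat) = of_nat N * u"
  by (induction N) (auto simp: algebra_simps)

lemma nmul_in: "0 \<in> P \<Longrightarrow> \<forall>x\<in>P. \<forall>y\<in>P. x + y \<in> P \<Longrightarrow> u \<in> P \<Longrightarrow> nmul N u \<in> P"
  by (induction N) auto

lemma Z_gi_sub: "Z_gi n \<subseteq> Z_gi (gi_mult n m)"
proof -
  have "lev (Z_gi n) 1 = Z_gi n" unfolding lev_def by simp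
  then show ?thesis using lev_in_Z[of 1 m n] gi_dvd_one by simp
qed

theorem theorem1p2:
  fixes Gp :: "'a::ab_group_add set" and n m :: gen_int
  assumes pog: "po_group UNIV Gp"
    and simple: "simple_pog UNIV Gp"
    and rank1: "rank_one (UNIV :: 'a set)"
    and assoc: "\<exists>f. ab_iso (UNIV :: 'a set) (Z_gi n) f"
    and m_inf: "\<not> gi_finite m"
    and cop: "gi_coprime n m"
  shows "\<exists>(H :: rat set) Hp (\<tau> :: 'a \<Rightarrow> rat).
           po_group H Hp \<and> simple_pog H Hp \<and> riesz H Hp \<and> rank_one H
         \<and> (\<exists>g. ab_iso H (Z_gi (gi_mult n m)) g)
         \<and> pos_morph UNIV Gp H Hp \<tau>
         \<and> order_embedding UNIV Gp H Hp \<tau>"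
proof -
  obtain f where f: "additive_on UNIV f" "bij_betw f (UNIV :: 'a set) (Z_gi n)"
    using assoc unfolding ab_iso_def by blast
  have finj: "inj f" using f(2) unfolding bij_betw_def by blast
  have fimg: "f ` UNIV = Z_gi n" using f(2) unfolding bij_betw_def by blast
  have G0: "0 \<in> Gp" and Gadd: "\<forall>x\<in>Gp. \<forall>y\<in>Gp. x + y \<in> Gp" and Gpm: "Gp \<inter> uminus ` Gp = {0}"
    using pog unfolding po_group_def by blast+
  have Gsimp: "\<forall>u\<in>Gp. u \<noteq> 0 \<longrightarrow> order_unit UNIV Gp u" using simple unfolding simple_pog_def by blast
  have onesided: False if u: "u \<in> Gp" "f u > 0" and v: "v \<in> Gp" "f v < 0" for u v
  proof -
    obtain a b where ab: "b > 0" "f u = of_int a / of_int b" using rat_repr by blast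
    obtain c d where cd: "d > 0" "- f v = of_int c / of_int d" using rat_repr by blast
    have a0: "a > 0" using ab u(2) by (simp add: divide_pos_pos zero_less_divide_iff)
    have "0 < (of_int c / of_int d :: rat)" using cd(2) v(2) by linarith
    then have c0: "c > 0" using cd(1) by (simp add: zero_less_divide_iff)
    define N1 where "N1 = nat (b * c)"
    define N2 where "N2 = nat (a * d)"
    have N1pos: "N1 > 0" unfolding N1_def using ab(1) c0 by simp
    have e1: "of_nat N1 * f u = of_int (a * c)" unfolding N1_def ab(2) using ab(1) c0 by simp
    have e2: "of_nat N2 * f v = - of_int (a * c)"
    proof -
      have "of_nat N2 * (- f v) = of_int (a * c)" unfolding N2_def cd(2) using cd(1) a0 by simp
      then show ?thesis by (simp add: algebra_simps)
    qed
    have "f (nmul N1 u + nmul N2 v) = 0"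
      using f(1) unfolding additive_on_def by (simp add: additive_nmul[OF f(1)] e1 e2)
    then have "nmul N1 u + nmul N2 v = 0" using finj additive_zero[OF f(1)] by (metis injD)
    then have eq: "nmul N1 u = - nmul N2 v" by (simp add: eq_neg_iff_add_eq_0)
    have "nmul N1 u \<in> Gp" using nmul_in[OF G0 Gadd u(1)] .
    moreover have "nmul N1 u \<in> uminus ` Gp" using eq nmul_in[OF G0 Gadd v(1)] by blast
    ultimately have "nmul N1 u = 0" using Gpm by blast
    then have "of_nat N1 * f u = 0" using additive_nmul[OF f(1), of N1 u] additive_zero[OF f(1)] by simp
    then show False using N1pos u(2) by simp
  qed
  define \<sigma> :: rat where "\<sigma> = (if \<exists>v\<in>Gp. f v < 0 then -1 else 1)"
  define \<tau> where "\<tau> = (\<lambda>x. \<sigma> * f x)"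
  have sig: "\<sigma> = 1 \<or> \<sigma> = -1" unfolding \<sigma>_def by simp
  have tadd: "additive_on UNIV \<tau>" using f(1) unfolding additive_on_def \<tau>_def by (simp add: algebra_simps)
  have tinj: "inj \<tau>" using finj sig unfolding \<tau>_def inj_def by auto
  have tnn: "\<tau> u \<ge> 0" if "u \<in> Gp" for u
  proof (cases "\<exists>v\<in>Gp. f v < 0")
    case True
    then have "\<sigma> = -1" unfolding \<sigma>_def by simp
    moreover have "f u \<le> 0" using True onesided that by (meson not_le)
    ultimately show ?thesis unfolding \<tau>_def by simp
  next
    case False
    then have "\<sigma> = 1" unfolding \<sigma>_def by simp
    moreover have "f u \<ge> 0" using False that by (meson not_le)
    ultimately show ?thesis unfolding \<tau>_def by simp
  qed
  have timg: "\<tau> ` UNIV = Z_gi n"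
  proof
    show "\<tau> ` UNIV \<subseteq> Z_gi n"
    proof
      fix y assume "y \<in> \<tau> ` UNIV"
      then obtain x where x: "y = \<sigma> * f x" unfolding \<tau>_def by blast
      have fx: "f x \<in> Z_gi n" using fimg by blast
      then have "- f x \<in> Z_gi n" using subgrp_Z_gi[of n] unfolding subgrp_def by blast
      then show "y \<in> Z_gi n" using sig fx x by auto
    qed
    show "Z_gi n \<subseteq> \<tau> ` UNIV"
    proof
      fix h assume h: "h \<in> Z_gi n"
      then have "\<sigma> * h \<in> Z_gi n" using sig subgrp_Z_gi[of n] unfolding subgrp_def by auto
      then obtain x where "f x = \<sigma> * h" using fimg by (metis imageE)
      then have "\<tau> x = h" unfolding \<tau>_def using sig by auto
      then show "h \<in> \<tau> ` UNIV" by (metis rangeI)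
    qed
  qed
  have tnmul: "\<tau> (nmul N x) = of_nat N * \<tau> x" for N x
    using additive_nmul[OF tadd] .
  have t0: "\<tau> 0 = 0" using additive_zero[OF tadd] .
  define S where "S = \<tau> ` Gp"
  have S1: "S \<subseteq> Z_gi n" unfolding S_def using timg by blast
  have S2: "0 \<in> S" unfolding S_def using G0 t0 by force
  have S3: "\<forall>a\<in>S. \<forall>b\<in>S. a + b \<in> S"
  proof (intro ballI)
    fix a b assume "a \<in> S" "b \<in> S"
    then obtain x y where "x \<in> Gp" "y \<in> Gp" "a = \<tau> x" "b = \<tau> y" unfolding S_def by blast
    then have "a + b = \<tau> (x + y)" "x + y \<in> Gp" using tadd Gadd unfolding additive_on_def by auto
    then show "a + b \<in> S" unfolding S_def by blast
  qed
  have S4: "\<forall>t\<in>S. 0 \<le> t" unfolding S_def using tnn by blast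
  have S5: "\<forall>u\<in>S. u \<noteq> 0 \<longrightarrow> (\<forall>h\<in>Z_gi n. \<exists>N::nat. h + of_nat N * u \<in> S \<and> of_nat N * u - h \<in> S)"
  proof (intro ballI impI)
    fix u h assume u: "u \<in> S" "u \<noteq> 0" and h: "h \<in> Z_gi n"
    obtain u' where u': "u' \<in> Gp" "u = \<tau> u'" using u(1) unfolding S_def by blast
    have "u' \<noteq> 0" using u(2) u' t0 by auto
    then have ou: "order_unit UNIV Gp u'" using Gsimp u' by blast
    obtain x where x: "h = \<tau> x" using h timg by blast
    obtain N where N: "po_le Gp (- nmul N u') x" "po_le Gp x (nmul N u')" using ou unfolding order_unit_def by blast
    have "x + nmul N u' \<in> Gp" using N(1) unfolding po_le_def by simp
    moreover have "\<tau> (x + nmul N u') = h + of_nat N * u" using tadd unfolding additive_on_def by (simp add: x u' tnmul)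
    moreover have "nmul N u' - x \<in> Gp" using N(2) unfolding po_le_def by simp
    moreover have "\<tau> (nmul N u' - x) = of_nat N * u - h"
    proof -
      have "\<tau> (nmul N u' + - x) = \<tau> (nmul N u') + \<tau> (- x)" using tadd unfolding additive_on_def by blast
      then show ?thesis using additive_neg[OF tadd, of x] by (simp add: x u' tnmul)
    qed
    ultimately show "\<exists>N::nat. h + of_nat N * u \<in> S \<and> of_nat N * u - h \<in> S" unfolding S_def by (metis image_eqI)
  qed
  obtain T where T: "T \<subseteq> Z_gi (gi_mult n m)" "0 \<in> T" "\<forall>a\<in>T. \<forall>b\<in>T. a + b \<in> T" "\<forall>t\<in>T. 0 \<le> t"
     "T \<inter> Z_gi n = S"
     "\<forall>u\<in>T. u \<noteq> 0 \<longrightarrow> (\<forall>h\<in>Z_gi (gi_mult n m). \<exists>N::nat. h + of_nat N * u \<in> T \<and> of_nat N * u - h \<in> T)"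
     "\<forall>x\<in>T. \<forall>y1\<in>T. \<forall>y2\<in>T. y1 + y2 - x \<in> T \<longrightarrow> (\<exists>x1\<in>T. \<exists>x2\<in>T. x = x1 + x2 \<and> y1 - x1 \<in> T \<and> y2 - x2 \<in> T)"
    using core'[OF cop m_inf S1 S2 S3 S4 S5] by blast
  define H where "H = Z_gi (gi_mult n m)"
  have Hsub: "subgrp H" unfolding H_def by (rule subgrp_Z_gi)
  have H1: "1 \<in> H" unfolding H_def by (rule one_in_Z_gi)
  have pg: "po_group H T"
    unfolding po_group_def
  proof (intro conjI)
    show "subgrp H" by (rule Hsub)
    show "T \<subseteq> H" using T(1) unfolding H_def .
    show "0 \<in> T" by (rule T(2))
    show "\<forall>x\<in>T. \<forall>y\<in>T. x + y \<in> T" by (rule T(3))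
    show "T \<inter> uminus ` T = {0}"
    proof
      show "T \<inter> uminus ` T \<subseteq> {0}"
      proof
        fix t assume "t \<in> T \<inter> uminus ` T"
        then obtain t' where tt: "t \<in> T" "t' \<in> T" "t = - t'" by blast
        then have "0 \<le> t" "0 \<le> t'" using T(4) by auto
        then have "t = 0" using tt(3) by linarith
        then show "t \<in> {0}" by simp
      qed
      show "{0} \<subseteq> T \<inter> uminus ` T" using T(2) by force
    qed
  qed
  have sp: "simple_pog H T"
    unfolding simple_pog_def
  proof (intro conjI ballI impI)
    show "H \<noteq> {0}" using H1 by auto
    fix u assume u: "u \<in> T" "u \<noteq> 0"
    show "order_unit H T u"
      unfolding order_unit_def po_le_def
    proof (intro conjI ballI)
      show "u \<in> T" by (rule u(1))
      fix x assume "x \<in> H"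
      then obtain N where "x + of_nat N * u \<in> T" "of_nat N * u - x \<in> T" using T(6) u unfolding H_def by blast
      then show "\<exists>N. x - - nmul N u \<in> T \<and> nmul N u - x \<in> T" by (intro exI[of _ N]) (simp add: nmul_rat)
    qed
  qed
  have rz: "riesz H T"
    unfolding riesz_def po_le_def
  proof (intro ballI impI)
    fix x y1 y2 assume "x \<in> T" "y1 \<in> T" "y2 \<in> T" "y1 + y2 - x \<in> T"
    then obtain x1 x2 where "x1 \<in> T" "x2 \<in> T" "x = x1 + x2" "y1 - x1 \<in> T" "y2 - x2 \<in> T" using T(7) by blast
    then show "\<exists>x1\<in>T. \<exists>x2\<in>T. x = x1 + x2 \<and> y1 - x1 \<in> T \<and> y2 - x2 \<in> T" by blast
  qed
  have idiso: "ab_iso H H id" unfolding ab_iso_def additive_on_def by simp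
  have Hn0: "H \<noteq> {0}" using H1 by auto
  have r1: "rank_one H" unfolding rank_one_def
    by (rule exI[of _ H], rule exI[of _ id]) (intro conjI Hsub Hn0 idiso)
  have iso: "\<exists>g. ab_iso H (Z_gi (gi_mult n m)) g" using idiso unfolding H_def by blast
  have SK: "S \<subseteq> T" using T(5) by blast
  have tH: "\<tau> ` UNIV \<subseteq> H" unfolding H_def using timg Z_gi_sub by (metis equalityE subset_trans)
  have tT: "\<tau> ` Gp \<subseteq> T" using SK unfolding S_def .
  have pm: "pos_morph UNIV Gp H T \<tau>"
    unfolding pos_morph_def by (intro conjI tadd tH tT)
  have oe: "order_embedding UNIV Gp H T \<tau>"
    unfolding order_embedding_def
  proof (intro conjI)
    show "pos_morph UNIV Gp H T \<tau>" by (rule pm)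
    show "inj_on \<tau> UNIV" using tinj .
    show "\<tau> ` Gp = \<tau> ` UNIV \<inter> T"
    proof
      show "\<tau> ` Gp \<subseteq> \<tau> ` UNIV \<inter> T" using SK unfolding S_def by blast
      show "\<tau> ` UNIV \<inter> T \<subseteq> \<tau> ` Gp"
      proof
        fix y assume "y \<in> \<tau> ` UNIV \<inter> T"
        then have "y \<in> T \<inter> Z_gi n" using timg by blast
        then show "y \<in> \<tau> ` Gp" using T(5) unfolding S_def by blast
      qed
    qed
  qed
  show ?thesis
    by (rule exI[of _ H], rule exI[of _ T], rule exI[of _ \<tau>]) (intro conjI pg sp rz r1 iso pm oe)
qed

end
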